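(* Assume Hypotheses 1, 2 and 3 (see context), and let $h:K\to\mathbb{R}^n$ be the function with $\Gamma=\{(h(z),z):z\in K\}$. Then $h$ is differentiable at every $z\in K$, and $Dh(z)=H(h(z),z)$ for all $z\in K$.
   Context: System $\dot x=F(x)$ with $F=(f,g)$, i.e. $\dot a=f(a,z)$, $\dot z=g(a,z)$, $(a,z)\in\mathbb{R}^n\times\mathbb{R}^m$, $X=\mathbb{R}^n\times\mathbb{R}^m$, flow $\Phi(t,x)$. Euclidean inner product, norm, operator norm. $\mathcal{L}(x_1,x_2)=\|a_2-a_1\|^2-\|z_2-z_1\|^2$, $\mathcal{C}(x)=\{x'\in X:\mathcal{L}(x',x)\ge0\}$, $\mathbf{0}$ the zero vector of $X$; $\Pi(a,z)=a$, $\Pi_\perp(a,z)=z$; $\mathbb{B}_d(x)=\{(a',z'):\|a'-a\|\le d,\|z'-z\|\le d\}$. $\Gamma\subseteq U$ positively invariant means $\Phi(t,x)$ is defined for all $t\ge0$ for $x\in\Gamma$ and $\Phi(t,\Gamma)\subseteq\Gamma$. Hypothesis 1: $U$ open and convex, and there is $d>0$ with $\mathcal{C}(x)\cap U\subset\mathbb{B}_d(x)$ for all $x\in U$. Hypothesis 2: $f,g$ are $C^1$ on $U$; there exist continuous $\alpha>0$, $\ell\ge0$ on $U$ and $c_1>0$ with, for all $x\in U$: $\langle a',D_af(x)a'\rangle\ge\alpha(x)\|a'\|^2$; $\langle z',D_zg(x)z'\rangle\le\ell(x)\|z'\|^2$; $\alpha(x)\ge\ell(x)+\|D_zf(x)\|+\|D_ag(x)\|+c_1$.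 Hypothesis 3: $\Gamma\subset U$ is positively invariant and $\Pi_\perp(\Gamma)=\Pi_\perp(U)$. Let $K:=\Pi_\perp(U)$; under these hypotheses $\Gamma$ is the graph of a function $h:K\to\mathbb{R}^n$ with $\|h(z_2)-h(z_1)\|<\|z_2-z_1\|$ for $z_1\ne z_2$. For $x\in\Gamma$, $Q(t,x)$ ($t\ge0$) denotes the fundamental matrix solution of $\dot{\mathbf{x}}=DF(\Phi(t,x))\mathbf{x}$ with $Q(0,x)=I$, and $T(x):=\{\mathbf{x}\in X: \mathcal{L}(Q(t,x)\mathbf{x},\mathbf{0})\le0\text{ for all }t\ge0\}$. Under these hypotheses each $T(x)$ is the graph of a unique linear map $H(x):\mathbb{R}^m\to\mathbb{R}^n$, i.e. $T(x)=\{(H(x)\mathbf{z},\mathbf{z}):\mathbf{z}\in\mathbb{R}^m\}$. *)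

theory Defs
  imports "HOL-Analysis.Analysis"
begin

definition Lfun :: "('a::real_normed_vector \<times> 'b::real_normed_vector) \<Rightarrow> ('a \<times> 'b) \<Rightarrow> real" where
  "Lfun x1 x2 = (norm (fst x2 - fst x1))^2 - (norm (snd x2 - snd x1))^2"

definition Ccone :: "('a::real_normed_vector \<times> 'b::real_normed_vector) \<Rightarrow> ('a \<times> 'b) set" where
  "Ccone x = {x'. Lfun x' x \<ge> 0}"

definition Bbox :: "real \<Rightarrow> ('a::real_normed_vector \<times> 'b::real_normed_vector) \<Rightarrow> ('a \<times> 'b) set" where
  "Bbox d x = {x'. norm (fst x' - fst x) \<le> d \<and> norm (snd x' - snd x) \<le> d}"

definition DFapp :: "('a \<times> 'b \<Rightarrow> ('a \<times> 'b) \<Rightarrow>\<^sub>L 'a) \<Rightarrow> ('a \<times> 'b \<Rightarrow> ('a \<times> 'b) \<Rightarrow>\<^sub>L 'b)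
     \<Rightarrow> ('a::real_normed_vector \<times> 'b::real_normed_vector) \<Rightarrow> ('a \<times> 'b) \<Rightarrow> ('a \<times> 'b)" where
  "DFapp f' g' y v = (blinfun_apply (f' y) v, blinfun_apply (g' y) v)"

text \<open>T(x): initial vectors v whose solution Q(t,x)v of the variational equation
  along the flow Phi(t,x) satisfies L(Q(t,x)v, 0) <= 0 for all t >= 0.
  (The solution of this linear ODE with continuous coefficients exists and is unique.)\<close>
definition Tset :: "('a \<times> 'b \<Rightarrow> ('a \<times> 'b) \<Rightarrow>\<^sub>L 'a) \<Rightarrow> ('a \<times> 'b \<Rightarrow> ('a \<times> 'b) \<Rightarrow>\<^sub>L 'b)
     \<Rightarrow> (real \<Rightarrow> ('a::real_normed_vector \<times> 'b::real_normed_vector) \<Rightarrow> ('a \<times> 'b))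
     \<Rightarrow> ('a \<times> 'b) \<Rightarrow> ('a \<times> 'b) set" where
  "Tset f' g' Phi x = {v. \<forall>w. (w 0 = v \<and>
       (\<forall>t\<ge>0. (w has_vector_derivative DFapp f' g' (Phi t x) (w t)) (at t within {0..})))
       \<longrightarrow> (\<forall>t\<ge>0. Lfun (w t) 0 \<le> 0)}"

definition Hmap :: "('a \<times> 'b \<Rightarrow> ('a \<times> 'b) \<Rightarrow>\<^sub>L 'a) \<Rightarrow> ('a \<times> 'b \<Rightarrow> ('a \<times> 'b) \<Rightarrow>\<^sub>L 'b)
     \<Rightarrow> (real \<Rightarrow> ('a::real_normed_vector \<times> 'b::real_normed_vector) \<Rightarrow> ('a \<times> 'b))
     \<Rightarrow> ('a \<times> 'b) \<Rightarrow> ('b \<Rightarrow> 'a)" where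
  "Hmap f' g' Phi x = (THE H. linear H \<and> Tset f' g' Phi x = {(H z, z) | z. True})"

end

theory Submission
  imports Defs "HOL-Analysis.Analysis"
begin


lemma deriv_nonneg_incr:
  fixes \<phi> :: "real \<Rightarrow> real"
  assumes ab: "a \<le> b" and S: "{a..b} \<subseteq> S"
    and d: "\<And>t. a \<le> t \<Longrightarrow> t \<le> b \<Longrightarrow> (\<phi> has_real_derivative \<phi>' t) (at t within S)"
    and nn: "\<And>t. a < t \<Longrightarrow> t < b \<Longrightarrow> \<phi>' t \<ge> 0"
  shows "\<phi> a \<le> \<phi> b"
proof (rule DERIV_nonneg_imp_increasing_open[OF ab])
  fix x assume x: "a < x" "x < b"
  have "(\<phi> has_real_derivative \<phi>' x) (at x within {a<..<b})"
    using x S by (intro has_field_derivative_subset[OF d[of x]]) auto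
  moreover have "at x within {a<..<b} = at x" by (rule at_within_open) (use x in auto)
  ultimately have "(\<phi> has_real_derivative \<phi>' x) (at x)" by simp
  then show "\<exists>y. (\<phi> has_real_derivative y) (at x) \<and> 0 \<le> y" using nn x by blast
next
  show "continuous_on {a..b} \<phi>"
    unfolding continuous_on_eq_continuous_within
  proof
    fix t assume t: "t \<in> {a..b}"
    have "(\<phi> has_real_derivative \<phi>' t) (at t within {a..b})"
      using d[of t] t S by (auto intro: has_field_derivative_subset)
    then show "continuous (at t within {a..b}) \<phi>"
      by (rule DERIV_continuous)
  qed
qed

lemma persist_pos:
  fixes \<phi> :: "real \<Rightarrow> real"
  assumes d: "\<And>t. t \<ge> t0 \<Longrightarrow> (\<phi> has_real_derivative \<phi>' t) (at t within {t0..})"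
    and nn: "\<And>t. t \<ge> t0 \<Longrightarrow> \<phi> t > 0 \<Longrightarrow> \<phi>' t \<ge> 0"
    and p0: "\<phi> t0 > 0" and t: "t \<ge> t0"
  shows "\<phi> t \<ge> \<phi> t0"
proof (rule ccontr)
  assume "\<not> ?thesis"
  then have lt: "\<phi> t < \<phi> t0" by simp
  have cont: "continuous_on {t0..t} \<phi>"
    unfolding continuous_on_eq_continuous_within
  proof
    fix s assume s: "s \<in> {t0..t}"
    have "(\<phi> has_real_derivative \<phi>' s) (at s within {t0..t})"
      using d[of s] s by (auto intro: has_field_derivative_subset)
    then show "continuous (at s within {t0..t}) \<phi>"
      by (rule DERIV_continuous)
  qed
  show False
  proof (cases "\<exists>s\<in>{t0..t}. \<phi> s \<le> \<phi> t0 / 2")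
    case False
    have "\<phi> t0 \<le> \<phi> t"
    proof (rule deriv_nonneg_incr[OF t _ d])
      show "{t0..t} \<subseteq> {t0..}" by auto
      fix s assume s: "t0 < s" "s < t"
      then have "s \<in> {t0..t}" by auto
      then have "\<phi> s > \<phi> t0 / 2" using False by (meson not_le)
      then show "\<phi>' s \<ge> 0" using p0 nn[of s] s by auto
    qed auto
    with lt show False by simp
  next
    case True
    define Z where "Z = {s\<in>{t0..t}. \<phi> s \<le> \<phi> t0 / 2}"
    have Zne: "Z \<noteq> {}" using True Z_def by auto
    have Zc: "closed Z" unfolding Z_def
      using continuous_closed_preimage[OF cont closed_atLeastAtMost, of "{..\<phi> t0 / 2}"]
      by (simp add: vimage_def Int_def conj_commute)
    have Zb: "bdd_below Z" unfolding Z_def by (auto intro: bdd_belowI[of _ t0])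
    define s where "s = Inf Z"
    have sZ: "s \<in> Z" unfolding s_def using Zne Zc Zb closed_contains_Inf by blast
    have sle: "\<And>r. r \<in> Z \<Longrightarrow> s \<le> r" unfolding s_def using Zb by (simp add: cInf_lower)
    have st0: "s \<ge> t0" "s \<le> t" "\<phi> s \<le> \<phi> t0 / 2" using sZ Z_def by auto
    have "\<phi> t0 \<le> \<phi> s"
    proof (rule deriv_nonneg_incr[OF st0(1) _ d])
      show "{t0..s} \<subseteq> {t0..}" by auto
      fix r assume r: "t0 < r" "r < s"
      then have "r \<notin> Z" using sle by force
      then have "\<phi> r > \<phi> t0 / 2" using r st0 Z_def by auto
      then show "\<phi>' r \<ge> 0" using nn[of r] r p0 by auto
    qed auto
    with st0 p0 show False by simp
  qed
qed

lemma growth_exp: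
  fixes \<phi> :: "real \<Rightarrow> real"
  assumes d: "\<And>t. t \<ge> 0 \<Longrightarrow> (\<phi> has_real_derivative \<phi>' t) (at t within {0..})"
    and nn: "\<And>t. t \<ge> 0 \<Longrightarrow> \<phi> t > 0 \<Longrightarrow> \<phi>' t \<ge> k * \<phi> t"
    and p0: "\<phi> 0 > 0" and t: "t \<ge> 0"
  shows "\<phi> t \<ge> \<phi> 0 * exp (k * t)"
proof -
  define \<psi> where "\<psi> = (\<lambda>t. \<phi> t * exp (- k * t))"
  have d2: "(\<psi> has_real_derivative (\<phi>' s * exp (- k * s) - \<phi> s * (k * exp (- k * s)))) (at s within {0..})"
    if "s \<ge> 0" for s
    unfolding \<psi>_def using d[OF that]
    by (auto intro!: derivative_eq_intros)
  have "\<psi> t \<ge> \<psi> 0"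
  proof (rule persist_pos[OF d2 _ _ t])
    fix s assume s: "s \<ge> 0" "\<psi> s > 0"
    then have "\<phi> s > 0" unfolding \<psi>_def by (simp add: zero_less_mult_iff)
    then have "\<phi>' s \<ge> k * \<phi> s" using nn s by auto
    then show "\<phi>' s * exp (- k * s) - \<phi> s * (k * exp (- k * s)) \<ge> 0"
      by (simp add: algebra_simps mult_right_mono)
  qed (use p0 \<psi>_def in auto)
  then have "\<phi> t * exp (- k * t) \<ge> \<phi> 0" unfolding \<psi>_def by simp
  then have "\<phi> t * exp (- k * t) * exp (k * t) \<ge> \<phi> 0 * exp (k * t)"
    by (simp add: mult_right_mono)
  then show ?thesis by (simp add: mult.assoc exp_add[symmetric])
qed

lemma gronwall:
  fixes \<psi> :: "real \<Rightarrow> real"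
  assumes d: "\<And>t. 0 \<le> t \<Longrightarrow> t \<le> T \<Longrightarrow> (\<psi> has_real_derivative \<psi>' t) (at t within S)"
    and S: "{0..T} \<subseteq> S"
    and le: "\<And>t. 0 < t \<Longrightarrow> t < T \<Longrightarrow> \<psi>' t \<le> K * \<psi> t"
    and T: "0 \<le> T"
  shows "\<psi> T \<le> \<psi> 0 * exp (K * T)"
proof -
  define chi where "chi = (\<lambda>t. \<psi> t * exp (- K * t))"
  have d2: "(chi has_real_derivative (\<psi>' s * exp (- K * s) - \<psi> s * (K * exp (- K * s)))) (at s within S)"
    if "0 \<le> s" "s \<le> T" for s
    unfolding chi_def using d[OF that] by (auto intro!: derivative_eq_intros)
  have "- chi 0 \<le> - chi T"
  proof (rule deriv_nonneg_incr[OF T S])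
    fix s assume "0 \<le> s" "s \<le> T"
    then show "((\<lambda>x. - chi x) has_real_derivative - (\<psi>' s * exp (- K * s) - \<psi> s * (K * exp (- K * s)))) (at s within S)"
      using d2 by (auto intro!: derivative_eq_intros)
  next
    fix s assume "0 < s" "s < T"
    then have "\<psi>' s \<le> K * \<psi> s" using le by auto
    then show "0 \<le> - (\<psi>' s * exp (- K * s) - \<psi> s * (K * exp (- K * s)))"
      by (simp add: algebra_simps mult_right_mono)
  qed
  then have "\<psi> T * exp (- K * T) \<le> \<psi> 0" unfolding chi_def by simp
  then have "\<psi> T * exp (- K * T) * exp (K * T) \<le> \<psi> 0 * exp (K * T)"
    by (simp add: mult_right_mono)
  then show ?thesis by (simp add: mult.assoc exp_add[symmetric])
qed

lemma norm2_deriv: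
  fixes u :: "real \<Rightarrow> 'x::real_inner"
  assumes "(u has_vector_derivative u') (at t within S)"
  shows "((\<lambda>t. (norm (u t))\<^sup>2) has_real_derivative 2 * inner (u t) u') (at t within S)"
proof -
  have "((\<lambda>t. inner (u t) (u t)) has_real_derivative inner (u t) u' + inner u' (u t)) (at t within S)"
    using assms unfolding has_vector_derivative_def has_field_derivative_def
    by (auto intro!: derivative_eq_intros simp: inner_commute)
  then show ?thesis by (simp add: power2_norm_eq_inner inner_commute)
qed




primrec picd :: "(real \<Rightarrow> 'x::euclidean_space \<Rightarrow> 'x) \<Rightarrow> 'x \<Rightarrow> nat \<Rightarrow> real \<Rightarrow> 'x" where
  "picd A v 0 = (\<lambda>t. v)"
| "picd A v (Suc k) = (\<lambda>t. integral {0..t} (\<lambda>s. A s (picd A v k s)))"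

lemma at_within_nonneg:
  fixes t T :: real
  assumes "0 \<le> t" "t < T"
  shows "at t within {0..T} = at t within {0..}"
  by (rule at_within_nhd[where S="{t - 1 <..< T}"]) (use assms in auto)

lemma int_deriv_nonneg:
  fixes g :: "real \<Rightarrow> 'x::euclidean_space"
  assumes g: "continuous_on {0..} g" and t: "t \<ge> 0"
  shows "((\<lambda>t. integral {0..t} g) has_vector_derivative g t) (at t within {0..})"
proof -
  have "continuous_on {0..t+1} g" by (rule continuous_on_subset[OF g]) auto
  from integral_has_vector_derivative[OF this, of t]
  have "((\<lambda>t. integral {0..t} g) has_vector_derivative g t) (at t within {0..t+1})" using t by auto
  then show ?thesis using at_within_nonneg[of t "t+1"] t by simp
qed

lemma cont_from_deriv_nonneg:
  assumes "\<And>t. t \<ge> 0 \<Longrightarrow> (w has_vector_derivative w' t) (at t within {0..})"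
  shows "continuous_on {0..} w"
  unfolding continuous_on_eq_continuous_within
  using assms has_vector_derivative_continuous by fastforce

lemma cont_nonneg_from_T:
  assumes "\<And>T. T \<ge> 0 \<Longrightarrow> continuous_on {0..T} f"
  shows "continuous_on {0..} (f :: real \<Rightarrow> 'x::topological_space)"
  unfolding continuous_on_eq_continuous_within
proof
  fix x :: real assume x: "x \<in> {0..}"
  have "continuous (at x within {0..x+1}) f"
    using assms[of "x+1"] x by (auto simp: continuous_on_eq_continuous_within)
  then show "continuous (at x within {0..}) f"
    using at_within_nonneg[of x "x+1"] x by simp
qed

lemma int_power_bound:
  fixes c t :: real and k :: nat
  assumes "t \<ge> 0"
  shows "((\<lambda>s. c * s ^ k) has_integral (c * t ^ Suc k / real (Suc k))) {0..t}"
proof -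
  have "((\<lambda>s. c * s ^ k) has_integral ((\<lambda>s. c * s ^ Suc k / real (Suc k)) t - (\<lambda>s. c * s ^ Suc k / real (Suc k)) 0)) {0..t}"
  proof (rule fundamental_theorem_of_calculus[OF assms])
    fix x assume "x \<in> {0..t}"
    show "((\<lambda>s. c * s ^ Suc k / real (Suc k)) has_vector_derivative c * x ^ k) (at x within {0..t})"
      unfolding has_real_derivative_iff_has_vector_derivative[symmetric]
    proof -
      have "((\<lambda>s. s ^ Suc k) has_real_derivative real (Suc k) * x ^ k) (at x within {0..t})"
        using DERIV_pow[of "Suc k" x] by (simp add: has_field_derivative_at_within del: of_nat_Suc)
      from DERIV_cdivide[OF DERIV_cmult[OF this, of c], of "real (Suc k)"]
      show "((\<lambda>s. c * s ^ Suc k / real (Suc k)) has_real_derivative c * x ^ k) (at x within {0..t})"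
        by (simp del: of_nat_Suc)
    qed
  qed
  then show ?thesis by simp
qed

lemma linode_exists:
  fixes A :: "real \<Rightarrow> 'x::euclidean_space \<Rightarrow> 'x"
  assumes lin: "\<And>t. linear (A t)"
    and cont: "\<And>d. continuous_on {0..} d \<Longrightarrow> continuous_on {0..} (\<lambda>s. A s (d s))"
    and bnd: "\<And>T. \<exists>M. \<forall>t\<in>{0..T}. \<forall>v. norm (A t v) \<le> M * norm v"
  shows "\<exists>w. w 0 = v \<and> (\<forall>t\<ge>0. (w has_vector_derivative A t (w t)) (at t within {0..}))"
proof -
  let ?d = "picd A v"
  have dc: "continuous_on {0..} (?d k)" for k
  proof (induction k)
    case 0 then show ?case by simp
  next
    case (Suc k)
    show ?case
      by (simp, rule cont_from_deriv_nonneg, rule int_deriv_nonneg, rule cont[OF Suc]) simp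
  qed
  have bndM: "\<exists>M\<ge>0. \<forall>t\<in>{0..T}. \<forall>v. norm (A t v) \<le> M * norm v" for T
  proof -
    obtain M where M: "\<forall>t\<in>{0..T}. \<forall>v. norm (A t v) \<le> M * norm v" using bnd by blast
    have "\<forall>t\<in>{0..T}. \<forall>v. norm (A t v) \<le> max M 0 * norm v"
      using M by (meson max.cobounded1 mult_right_mono norm_ge_zero order_trans)
    then show ?thesis by (intro exI[of _ "max M 0"]) auto
  qed
  define w where "w t = suminf (\<lambda>i. ?d i t)" for t
  have key: "uniform_limit {0..T} (\<lambda>n t. \<Sum>i<n. ?d i t) w sequentially" if T: "T \<ge> 0" for T
  proof -
    obtain M where M0: "M \<ge> 0" and M: "\<forall>t\<in>{0..T}. \<forall>v. norm (A t v) \<le> M * norm v"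
      using bndM by blast
    have ind: "\<forall>t\<in>{0..T}. norm (?d k t) \<le> norm v * (M * t) ^ k / fact k" for k
    proof (induction k)
      case 0 then show ?case by simp
    next
      case (Suc k)
      show ?case
      proof
        fix t assume t: "t \<in> {0..T}"
        have ci: "continuous_on {0..t} (\<lambda>s. A s (?d k s))"
          by (rule continuous_on_subset[OF cont[OF dc]]) auto
        let ?c = "norm v * M ^ Suc k / fact k"
        have hi: "((\<lambda>s. ?c * s ^ k) has_integral (?c * t ^ Suc k / real (Suc k))) {0..t}"
          by (rule int_power_bound) (use t in auto)
        have "norm (integral {0..t} (\<lambda>s. A s (?d k s))) \<le> integral {0..t} (\<lambda>s. ?c * s ^ k)"
        proof (rule integral_norm_bound_integral)
          show "(\<lambda>s. A s (?d k s)) integrable_on {0..t}" by (rule integrable_continuous_interval[OF ci])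
          show "(\<lambda>s. ?c * s ^ k) integrable_on {0..t}" using hi by blast
          fix s assume s: "s \<in> {0..t}"
          then have sT: "s \<in> {0..T}" using t by auto
          have "norm (A s (?d k s)) \<le> M * norm (?d k s)" using M sT by blast
          also have "\<dots> \<le> M * (norm v * (M * s) ^ k / fact k)"
            using Suc sT M0 by (intro mult_left_mono) auto
          also have "\<dots> = ?c * s ^ k" by (simp add: power_mult_distrib field_simps)
          finally show "norm (A s (?d k s)) \<le> ?c * s ^ k" .
        qed
        also have "\<dots> = ?c * t ^ Suc k / real (Suc k)" using hi by (rule integral_unique)
        also have "\<dots> = norm v * (M * t) ^ Suc k / fact (Suc k)"
          by (simp add: power_mult_distrib field_simps del: of_nat_Suc)
        finally show "norm (?d (Suc k) t) \<le> norm v * (M * t) ^ Suc k / fact (Suc k)" by simp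
      qed
    qed
    show ?thesis unfolding w_def
    proof (rule Weierstrass_m_test)
      fix n t assume t: "t \<in> {0..T}"
      have "norm (?d n t) \<le> norm v * (M * t) ^ n / fact n" using ind t by blast
      also have "\<dots> \<le> norm v * (M * T) ^ n / fact n"
        using t M0 by (intro divide_right_mono mult_left_mono power_mono mult_left_mono) auto
      finally show "norm (?d n t) \<le> norm v * (M * T) ^ n / fact n" .
    next
      show "summable (\<lambda>n. norm v * (M * T) ^ n / fact n)"
        using summable_mult[OF summable_exp[of "M*T"], of "norm v"]
        by (simp add: field_simps)
    qed
  qed
  have Sc: "continuous_on {0..} (\<lambda>t. \<Sum>i<n. ?d i t)" for n
    by (intro continuous_on_sum dc)
  have wc: "continuous_on {0..} w"
  proof (rule cont_nonneg_from_T)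
    fix T :: real assume T: "T \<ge> 0"
    show "continuous_on {0..T} w"
      by (rule uniform_limit_theorem[OF _ key[OF T]])
         (auto intro!: always_eventually continuous_on_subset[OF Sc])
  qed
  have eq: "w t = v + integral {0..t} (\<lambda>s. A s (w s))" if t: "t \<ge> 0" for t
  proof -
    let ?S = "\<lambda>n s. \<Sum>i<n. ?d i s"
    have a: "?S (Suc n) t = v + integral {0..t} (\<lambda>s. A s (?S n s))" for n
    proof -
      have "?S (Suc n) t = ?d 0 t + (\<Sum>i<n. ?d (Suc i) t)"
        by (rule sum.lessThan_Suc_shift)
      also have "(\<Sum>i<n. ?d (Suc i) t) = (\<Sum>i<n. integral {0..t} (\<lambda>s. A s (?d i s)))" by simp
      also have "\<dots> = integral {0..t} (\<lambda>s. \<Sum>i<n. A s (?d i s))"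
        by (rule integral_sum[symmetric])
           (auto intro!: integrable_continuous_interval continuous_on_subset[OF cont[OF dc]])
      also have "\<dots> = integral {0..t} (\<lambda>s. A s (?S n s))"
        by (simp add: linear_sum[OF lin] o_def)
      finally show ?thesis by simp
    qed
    have b: "(\<lambda>n. ?S (Suc n) t) \<longlonglongrightarrow> w t"
      using LIMSEQ_Suc[OF tendsto_uniform_limitI[OF key[OF t], of t]] t
      by (simp del: sum.lessThan_Suc)
    obtain M where M0: "M \<ge> 0" and M: "\<forall>s\<in>{0..t}. \<forall>v. norm (A s v) \<le> M * norm v"
      using bndM by blast
    have ul: "uniform_limit {0..t} (\<lambda>n s. A s (?S n s)) (\<lambda>s. A s (w s)) sequentially"
      unfolding uniform_limit_iff
    proof (intro allI impI)
      fix e :: real assume e: "e > 0"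
      have "\<forall>\<^sub>F n in sequentially. \<forall>s\<in>{0..t}. dist (?S n s) (w s) < e / (M + 1)"
        using key[OF t] e M0 unfolding uniform_limit_iff by auto
      then show "\<forall>\<^sub>F n in sequentially. \<forall>s\<in>{0..t}. dist (A s (?S n s)) (A s (w s)) < e"
      proof (rule eventually_mono)
        fix n assume h: "\<forall>s\<in>{0..t}. dist (?S n s) (w s) < e / (M + 1)"
        show "\<forall>s\<in>{0..t}. dist (A s (?S n s)) (A s (w s)) < e"
        proof
          fix s assume s: "s \<in> {0..t}"
          have "dist (A s (?S n s)) (A s (w s)) = norm (A s (?S n s - w s))"
            by (simp add: dist_norm linear_diff[OF lin])
          also have "\<dots> \<le> M * norm (?S n s - w s)" using M s by blast
          also have "\<dots> \<le> M * (e / (M + 1))"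
            using h s M0 by (intro mult_left_mono) (auto simp: dist_norm less_imp_le)
          also have "\<dots> < e" using e M0 by (simp add: field_simps)
          finally show "dist (A s (?S n s)) (A s (w s)) < e" .
        qed
      qed
    qed
    obtain I J where I: "\<And>n. ((\<lambda>s. A s (?S n s)) has_integral I n) {0..t}"
      and J: "((\<lambda>s. A s (w s)) has_integral J) {0..t}" and IJ: "I \<longlonglongrightarrow> J"
      by (rule uniform_limit_integral[OF ul])
         (auto intro!: continuous_on_subset[OF cont[OF Sc]])
    have "(\<lambda>n. ?S (Suc n) t) \<longlonglongrightarrow> v + J"
    proof -
      have "integral {0..t} (\<lambda>s. A s (?S n s)) = I n" for n using I[of n] by (rule integral_unique)
      then show ?thesis unfolding a using IJ by (simp add: tendsto_add)
    qed
    with b have "w t = v + J" by (rule LIMSEQ_unique)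
    then show ?thesis using J by (simp add: integral_unique)
  qed
  have gc: "continuous_on {0..} (\<lambda>s. A s (w s))" by (rule cont[OF wc])
  show ?thesis
  proof (intro exI conjI allI impI)
    show "w 0 = v" using eq[of 0] by simp
    fix t :: real assume t: "t \<ge> 0"
    have D: "((\<lambda>t. v + integral {0..t} (\<lambda>s. A s (w s))) has_vector_derivative A t (w t)) (at t within {0..})"
      using int_deriv_nonneg[OF gc t] by (auto intro!: derivative_eq_intros)
    show "(w has_vector_derivative A t (w t)) (at t within {0..})"
    proof (rule has_vector_derivative_transform[OF _ _ D])
      show "t \<in> {0..}" using t by auto
      fix x :: real assume "x \<in> {0..}"
      then show "w x = v + integral {0..x} (\<lambda>s. A s (w s))" using eq by auto
    qed
  qed
qed

lemma linode_unique:
  fixes A :: "real \<Rightarrow> 'x::euclidean_space \<Rightarrow> 'x"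
  assumes bnd: "\<And>T. \<exists>M. \<forall>t\<in>{0..T}. \<forall>v. norm (A t v) \<le> M * norm v"
    and d: "\<And>t. t \<ge> 0 \<Longrightarrow> (u has_vector_derivative A t (u t)) (at t within {0..})"
    and u0: "u 0 = 0" and t: "t \<ge> 0"
  shows "u t = 0"
proof -
  obtain M where M: "\<forall>s\<in>{0..t}. \<forall>v. norm (A s v) \<le> M * norm v" using bnd by blast
  have "(norm (u t))\<^sup>2 \<le> (norm (u 0))\<^sup>2 * exp ((2 * M) * t)"
  proof (rule gronwall[OF _ _ _ t])
    fix s assume s: "0 \<le> s" "s \<le> t"
    show "((\<lambda>t. (norm (u t))\<^sup>2) has_real_derivative 2 * inner (u s) (A s (u s))) (at s within {0..})"
      by (rule norm2_deriv[OF d]) (use s in auto)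
  next
    fix s assume s: "0 < s" "s < t"
    have "inner (u s) (A s (u s)) \<le> norm (u s) * norm (A s (u s))" by (rule norm_cauchy_schwarz)
    also have "\<dots> \<le> norm (u s) * (M * norm (u s))" using M s by (intro mult_left_mono) auto
    finally show "2 * inner (u s) (A s (u s)) \<le> 2 * M * (norm (u s))\<^sup>2"
      by (simp add: power2_eq_square algebra_simps)
  qed auto
  then show ?thesis using u0 by simp
qed




definition Lq :: "('a::real_normed_vector \<times> 'b::real_normed_vector) \<Rightarrow> real" where
  "Lq v = (norm (fst v))\<^sup>2 - (norm (snd v))\<^sup>2"

lemma Lfun_0: "Lfun w 0 = Lq w"
  by (simp add: Lfun_def Lq_def)

lemma Lq_le0_iff: "Lq v \<le> 0 \<longleftrightarrow> norm (fst v) \<le> norm (snd v)"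
  unfolding Lq_def by (simp add: abs_le_square_iff[symmetric])

lemma vd_fst:
  assumes "(w has_vector_derivative w') F"
  shows "((\<lambda>t. fst (w t)) has_vector_derivative fst w') F"
  using has_derivative_fst[OF assms[unfolded has_vector_derivative_def]]
  by (simp add: has_vector_derivative_def)

lemma vd_snd:
  assumes "(w has_vector_derivative w') F"
  shows "((\<lambda>t. snd (w t)) has_vector_derivative snd w') F"
  using has_derivative_snd[OF assms[unfolded has_vector_derivative_def]]
  by (simp add: has_vector_derivative_def)

lemma Lq_deriv:
  fixes w :: "real \<Rightarrow> 'a::real_inner \<times> 'b::real_inner"
  assumes "(w has_vector_derivative w') (at t within S)"
  shows "((\<lambda>t. Lq (w t)) has_real_derivative
            2 * inner (fst (w t)) (fst w') - 2 * inner (snd (w t)) (snd w')) (at t within S)"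
  unfolding Lq_def
  using DERIV_diff[OF norm2_deriv[OF vd_fst[OF assms]] norm2_deriv[OF vd_snd[OF assms]]]
  by simp

lemma norm_pair_le: "norm (a, b) \<le> norm (a::'a::real_normed_vector) + norm (b::'b::real_normed_vector)"
proof -
  have "norm (a, b) = sqrt ((norm a)\<^sup>2 + (norm b)\<^sup>2)" by (simp add: norm_Pair)
  also have "\<dots> \<le> \<bar>norm a\<bar> + \<bar>norm b\<bar>" by (rule sqrt_sum_squares_le_sum_abs)
  finally show ?thesis by simp
qed

lemma DFapp_linear: "linear (DFapp f' g' y)"
  unfolding DFapp_def
  by (intro linearI) (auto simp: blinfun.add_right blinfun.scaleR_right)

lemma DFapp_bound: "norm (DFapp f' g' y v) \<le> (norm (f' y) + norm (g' y)) * norm v"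
proof -
  have "norm (DFapp f' g' y v) \<le> norm (f' y v) + norm (g' y v)"
    unfolding DFapp_def by (rule norm_pair_le)
  also have "\<dots> \<le> norm (f' y) * norm v + norm (g' y) * norm v"
    by (intro add_mono norm_blinfun)
  finally show ?thesis by (simp add: algebra_simps)
qed

lemma DFapp_diff_bound:
  "norm (DFapp f' g' p v - DFapp f' g' q v) \<le> (norm (f' p - f' q) + norm (g' p - g' q)) * norm v"
proof -
  have "DFapp f' g' p v - DFapp f' g' q v = (blinfun_apply (f' p - f' q) v, blinfun_apply (g' p - g' q) v)"
    by (simp add: DFapp_def blinfun.diff_left)
  also have "norm \<dots> \<le> norm (f' p - f' q) * norm v + norm (g' p - g' q) * norm v"
    by (rule order_trans[OF norm_pair_le]) (intro add_mono norm_blinfun)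
  finally show ?thesis by (simp add: algebra_simps)
qed

lemma bl_pair0: "bounded_linear (\<lambda>z. blinfun_apply F (0, z))"
  by (rule bounded_linear_compose[OF blinfun.bounded_linear_right])
     (intro bounded_linear_Pair bounded_linear_zero bounded_linear_ident)

lemma bl_pair0': "bounded_linear (\<lambda>a. blinfun_apply F (a, 0))"
  by (rule bounded_linear_compose[OF blinfun.bounded_linear_right])
     (intro bounded_linear_Pair bounded_linear_zero bounded_linear_ident)

lemma blin_split: "blinfun_apply F (a, z) = blinfun_apply F (a, 0) + blinfun_apply F (0, z)"
  using blinfun.add_right[of F "(a, 0)" "(0, z)"] by simp

locale setting =
  fixes f :: "'a::euclidean_space \<times> 'b::euclidean_space \<Rightarrow> 'a"
    and g :: "'a \<times> 'b \<Rightarrow> 'b"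
    and f' :: "'a \<times> 'b \<Rightarrow> ('a \<times> 'b) \<Rightarrow>\<^sub>L 'a"
    and g' :: "'a \<times> 'b \<Rightarrow> ('a \<times> 'b) \<Rightarrow>\<^sub>L 'b"
    and U \<Gamma> :: "('a \<times> 'b) set"
    and Phi :: "real \<Rightarrow> 'a \<times> 'b \<Rightarrow> 'a \<times> 'b"
    and alpha ell :: "'a \<times> 'b \<Rightarrow> real"
    and d c1 :: real
    and h :: "'b \<Rightarrow> 'a"
  assumes H1_open: "open U" and H1_convex: "convex U" and H1_d: "d > 0"
    and H1_cone: "\<forall>x\<in>U. Ccone x \<inter> U \<subseteq> Bbox d x"
    and H2_f: "\<forall>x\<in>U. (f has_derivative blinfun_apply (f' x)) (at x)"
    and H2_g: "\<forall>x\<in>U. (g has_derivative blinfun_apply (g' x)) (at x)"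
    and H2_fcont: "continuous_on U f'" and H2_gcont: "continuous_on U g'"
    and H2_alpha: "continuous_on U alpha" "\<forall>x\<in>U. alpha x > 0"
    and H2_ell: "continuous_on U ell" "\<forall>x\<in>U. ell x \<ge> 0"
    and H2_c1: "c1 > 0"
    and H2_a: "\<forall>x\<in>U. \<forall>a'. inner a' (blinfun_apply (f' x) (a', 0)) \<ge> alpha x * (norm a')^2"
    and H2_z: "\<forall>x\<in>U. \<forall>z'. inner z' (blinfun_apply (g' x) (0, z')) \<le> ell x * (norm z')^2"
    and H2_dom: "\<forall>x\<in>U. alpha x \<ge> ell x + onorm (\<lambda>z'. blinfun_apply (f' x) (0, z'))
                                  + onorm (\<lambda>a'. blinfun_apply (g' x) (a', 0)) + c1"
    and H3_sub: "\<Gamma> \<subseteq> U"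
    and H3_flow: "\<forall>x\<in>\<Gamma>. Phi 0 x = x \<and>
        (\<forall>t\<ge>0. ((\<lambda>s. Phi s x) has_vector_derivative (f (Phi t x), g (Phi t x))) (at t within {0..})
               \<and> Phi t x \<in> \<Gamma>)"
    and H3_proj: "snd ` \<Gamma> = snd ` U"
    and h_graph: "\<Gamma> = {(h z, z) | z. z \<in> snd ` U}"
begin

definition "Bn x = onorm (\<lambda>z'. blinfun_apply (f' x) (0::'a, z'))"
definition "Cn x = onorm (\<lambda>a'. blinfun_apply (g' x) (a', 0::'b))"

lemma Bn_nonneg: "Bn x \<ge> 0" unfolding Bn_def by (rule onorm_pos_le[OF bl_pair0])
lemma Cn_nonneg: "Cn x \<ge> 0" unfolding Cn_def by (rule onorm_pos_le[OF bl_pair0'])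

lemma fa_lower:
  assumes p: "p \<in> U"
  shows "inner ua (blinfun_apply (f' p) (ua, uz)) \<ge> alpha p * (norm ua)\<^sup>2 - Bn p * norm ua * norm uz"
proof -
  have eq: "inner ua (blinfun_apply (f' p) (ua, uz)) = inner ua (blinfun_apply (f' p) (ua, 0)) + inner ua (blinfun_apply (f' p) (0, uz))"
    by (subst blin_split) (simp only: inner_add_right)
  have "inner ua (blinfun_apply (f' p) (0, uz)) \<ge> - (Bn p * norm ua * norm uz)"
  proof -
    have "\<bar>inner ua (blinfun_apply (f' p) (0, uz))\<bar> \<le> norm ua * norm (blinfun_apply (f' p) (0, uz))"
      by (rule Cauchy_Schwarz_ineq2)
    also have "\<dots> \<le> norm ua * (Bn p * norm uz)"
      unfolding Bn_def by (intro mult_left_mono onorm[OF bl_pair0]) auto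
    also have "\<dots> = Bn p * norm ua * norm uz" by (simp add: mult_ac)
    finally show ?thesis by linarith
  qed
  moreover have "inner ua (blinfun_apply (f' p) (ua, 0)) \<ge> alpha p * (norm ua)\<^sup>2"
    using H2_a p by blast
  ultimately show ?thesis unfolding eq by linarith
qed

lemma gz_upper:
  assumes p: "p \<in> U"
  shows "inner uz (blinfun_apply (g' p) (ua, uz)) \<le> ell p * (norm uz)\<^sup>2 + Cn p * norm ua * norm uz"
proof -
  have eq: "inner uz (blinfun_apply (g' p) (ua, uz)) = inner uz (blinfun_apply (g' p) (ua, 0)) + inner uz (blinfun_apply (g' p) (0, uz))"
    by (subst blin_split) (simp only: inner_add_right)
  have "inner uz (blinfun_apply (g' p) (ua, 0)) \<le> Cn p * norm ua * norm uz"
  proof -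
    have "\<bar>inner uz (blinfun_apply (g' p) (ua, 0))\<bar> \<le> norm uz * norm (blinfun_apply (g' p) (ua, 0))"
      by (rule Cauchy_Schwarz_ineq2)
    also have "\<dots> \<le> norm uz * (Cn p * norm ua)"
      unfolding Cn_def by (intro mult_left_mono onorm[OF bl_pair0']) auto
    also have "\<dots> = Cn p * norm ua * norm uz" by (simp add: mult_ac)
    finally show ?thesis by linarith
  qed
  moreover have "inner uz (blinfun_apply (g' p) (0, uz)) \<le> ell p * (norm uz)\<^sup>2"
    using H2_z p by blast
  ultimately show ?thesis unfolding eq by linarith
qed

lemma dom: "p \<in> U \<Longrightarrow> alpha p \<ge> ell p + Bn p + Cn p + c1"
  using H2_dom unfolding Bn_def Cn_def by blast

lemma cone_est:
  assumes p: "p \<in> U" and c: "norm uz \<le> norm ua"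
  shows "inner ua (blinfun_apply (f' p) (ua, uz)) - inner uz (blinfun_apply (g' p) (ua, uz)) \<ge> c1 * (norm ua)\<^sup>2"
proof -
  have B: "Bn p * norm ua * norm uz \<le> Bn p * (norm ua)\<^sup>2"
  proof -
    have "norm ua * norm uz \<le> norm ua * norm ua" using c by (simp add: mult_left_mono)
    then have "Bn p * (norm ua * norm uz) \<le> Bn p * (norm ua * norm ua)" using Bn_nonneg by (rule mult_left_mono)
    then show ?thesis by (simp add: power2_eq_square mult.assoc)
  qed
  have C: "Cn p * norm ua * norm uz \<le> Cn p * (norm ua)\<^sup>2"
  proof -
    have "norm ua * norm uz \<le> norm ua * norm ua" using c by (simp add: mult_left_mono)
    then have "Cn p * (norm ua * norm uz) \<le> Cn p * (norm ua * norm ua)" using Cn_nonneg by (rule mult_left_mono)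
    then show ?thesis by (simp add: power2_eq_square mult.assoc)
  qed
  have E: "ell p * (norm uz)\<^sup>2 \<le> ell p * (norm ua)\<^sup>2"
    using c H2_ell(2) p by (intro mult_left_mono power_mono) auto
  have D0: "(ell p + Bn p + Cn p + c1) * (norm ua)\<^sup>2 \<le> alpha p * (norm ua)\<^sup>2"
    using dom[OF p] by (intro mult_right_mono) auto
  have D: "ell p * (norm ua)\<^sup>2 + Bn p * (norm ua)\<^sup>2 + Cn p * (norm ua)\<^sup>2 + c1 * (norm ua)\<^sup>2 \<le> alpha p * (norm ua)\<^sup>2"
    using D0 by (simp only: distrib_right)
  show ?thesis using fa_lower[OF p, of ua uz] gz_upper[OF p, of uz ua] B C E D
    by linarith
qed

lemma cone_fa:
  assumes p: "p \<in> U" and c: "norm uz \<le> norm ua"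
  shows "inner ua (blinfun_apply (f' p) (ua, uz)) \<ge> (alpha p - Bn p) * (norm ua)\<^sup>2"
proof -
  have B: "Bn p * norm ua * norm uz \<le> Bn p * (norm ua)\<^sup>2"
  proof -
    have "norm ua * norm uz \<le> norm ua * norm ua" using c by (simp add: mult_left_mono)
    then have "Bn p * (norm ua * norm uz) \<le> Bn p * (norm ua * norm ua)" using Bn_nonneg by (rule mult_left_mono)
    then show ?thesis by (simp add: power2_eq_square mult.assoc)
  qed
  have "(alpha p - Bn p) * (norm ua)\<^sup>2 = alpha p * (norm ua)\<^sup>2 - Bn p * (norm ua)\<^sup>2"
    by (simp only: left_diff_distrib)
  then show ?thesis using fa_lower[OF p, of ua uz] B by linarith
qed

lemma noncone_gz:
  assumes p: "p \<in> U" and c: "norm ua \<le> norm uz"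
  shows "inner uz (blinfun_apply (g' p) (ua, uz)) \<le> (alpha p - Bn p - c1) * (norm uz)\<^sup>2"
proof -
  have C: "Cn p * norm ua * norm uz \<le> Cn p * (norm uz)\<^sup>2"
  proof -
    have "norm ua * norm uz \<le> norm uz * norm uz" using c by (simp add: mult_right_mono)
    then have "Cn p * (norm ua * norm uz) \<le> Cn p * (norm uz * norm uz)" using Cn_nonneg by (rule mult_left_mono)
    then show ?thesis by (simp add: power2_eq_square mult.assoc)
  qed
  have D0: "(ell p + Cn p) * (norm uz)\<^sup>2 \<le> (alpha p - Bn p - c1) * (norm uz)\<^sup>2"
    using dom[OF p] by (intro mult_right_mono) auto
  have D: "ell p * (norm uz)\<^sup>2 + Cn p * (norm uz)\<^sup>2 \<le> (alpha p - Bn p - c1) * (norm uz)\<^sup>2"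
    using D0 by (simp only: distrib_right)
  show ?thesis using gz_upper[OF p, of uz ua] C D by linarith
qed

lemma alpha_Bn_pos: "p \<in> U \<Longrightarrow> alpha p - Bn p \<ge> c1"
  using dom[of p] Cn_nonneg[of p] H2_ell(2) by force

end



context setting begin

lemma Gamma_U: "x \<in> \<Gamma> \<Longrightarrow> x \<in> U" using H3_sub by auto

lemma flow0: "x \<in> \<Gamma> \<Longrightarrow> Phi 0 x = x" using H3_flow by blast

lemma flow_in: "x \<in> \<Gamma> \<Longrightarrow> t \<ge> 0 \<Longrightarrow> Phi t x \<in> \<Gamma>" using H3_flow by blast

lemma flow_U: "x \<in> \<Gamma> \<Longrightarrow> t \<ge> 0 \<Longrightarrow> Phi t x \<in> U" using flow_in Gamma_U by blast

lemma flow_deriv: "x \<in> \<Gamma> \<Longrightarrow> t \<ge> 0 \<Longrightarrow>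
   ((\<lambda>s. Phi s x) has_vector_derivative (f (Phi t x), g (Phi t x))) (at t within {0..})"
  using H3_flow by blast

lemma flow_cont: "x \<in> \<Gamma> \<Longrightarrow> continuous_on {0..} (\<lambda>s. Phi s x)"
  by (rule cont_from_deriv_nonneg[OF flow_deriv])

lemma f_der: "p \<in> U \<Longrightarrow> (f has_derivative blinfun_apply (f' p)) (at p within S)"
  using H2_f by (auto intro: has_derivative_at_withinI)

lemma g_der: "p \<in> U \<Longrightarrow> (g has_derivative blinfun_apply (g' p)) (at p within S)"
  using H2_g by (auto intro: has_derivative_at_withinI)

lemma seg_U: "y1 \<in> U \<Longrightarrow> y2 \<in> U \<Longrightarrow> 0 \<le> s \<Longrightarrow> s \<le> 1 \<Longrightarrow> y2 + s *\<^sub>R (y1 - y2) \<in> U"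
proof -
  assume a: "y1 \<in> U" "y2 \<in> U" "0 \<le> s" "s \<le> 1"
  have "(1 - s) *\<^sub>R y2 + s *\<^sub>R y1 \<in> U"
    using H1_convex a unfolding convex_alt by blast
  moreover have "(1 - s) *\<^sub>R y2 + s *\<^sub>R y1 = y2 + s *\<^sub>R (y1 - y2)"
    by (simp add: algebra_simps)
  ultimately show ?thesis by simp
qed

lemma mvt_cone:
  assumes y1: "y1 \<in> U" and y2: "y2 \<in> U"
    and c: "norm (snd (y1 - y2)) \<le> norm (fst (y1 - y2))"
  shows "inner (fst (y1 - y2)) (f y1 - f y2) - inner (snd (y1 - y2)) (g y1 - g y2)
           \<ge> c1 * (norm (fst (y1 - y2)))\<^sup>2"
proof -
  define D where "D = y1 - y2"
  define \<psi> where "\<psi> s = inner (fst D) (f (y2 + s *\<^sub>R D)) - inner (snd D) (g (y2 + s *\<^sub>R D))" for s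
  define \<psi>' where "\<psi>' s = (\<lambda>h::real. h * (inner (fst D) (blinfun_apply (f' (y2 + s *\<^sub>R D)) D)
                         - inner (snd D) (blinfun_apply (g' (y2 + s *\<^sub>R D)) D)))" for s
  have der: "(\<psi> has_derivative \<psi>' s) (at s within {0..1})" if s: "0 \<le> s" "s \<le> 1" for s
  proof -
    let ?p = "y2 + s *\<^sub>R D"
    have pU: "?p \<in> U" unfolding D_def using seg_U[OF y1 y2 s] .
    have l: "((\<lambda>s. y2 + s *\<^sub>R D) has_derivative (\<lambda>h. h *\<^sub>R D)) (at s within {0..1})"
      by (auto intro!: derivative_eq_intros)
    have F: "((\<lambda>s. f (y2 + s *\<^sub>R D)) has_derivative (\<lambda>h. blinfun_apply (f' ?p) (h *\<^sub>R D))) (at s within {0..1})"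
      using diff_chain_within[OF l f_der[OF pU]] by (simp add: o_def)
    have G: "((\<lambda>s. g (y2 + s *\<^sub>R D)) has_derivative (\<lambda>h. blinfun_apply (g' ?p) (h *\<^sub>R D))) (at s within {0..1})"
      using diff_chain_within[OF l g_der[OF pU]] by (simp add: o_def)
    have "(\<psi> has_derivative (\<lambda>h. inner (fst D) (blinfun_apply (f' ?p) (h *\<^sub>R D)) - inner (snd D) (blinfun_apply (g' ?p) (h *\<^sub>R D)))) (at s within {0..1})"
      unfolding \<psi>_def
      by (intro has_derivative_diff bounded_linear.has_derivative[OF bounded_linear_inner_right] F G)
    then show ?thesis unfolding \<psi>'_def
      by (simp add: blinfun.scaleR_right inner_scaleR_right algebra_simps)
  qed
  obtain \<xi> where \<xi>: "\<xi> \<in> {0<..<1}" and eq: "\<psi> 1 - \<psi> 0 = \<psi>' \<xi> (1 - 0)"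
    using mvt_simple[of 0 1 \<psi> \<psi>'] der by force
  let ?p = "y2 + \<xi> *\<^sub>R D"
  have pU: "?p \<in> U" unfolding D_def using seg_U[OF y1 y2] \<xi> by auto
  have "\<psi>' \<xi> 1 \<ge> c1 * (norm (fst D))\<^sup>2"
    using cone_est[OF pU, of "snd D" "fst D"] c[folded D_def] unfolding \<psi>'_def by simp
  moreover have "\<psi> 1 - \<psi> 0 = inner (fst D) (f y1 - f y2) - inner (snd D) (g y1 - g y2)"
    unfolding \<psi>_def D_def by (simp add: inner_diff_right)
  ultimately show ?thesis using eq unfolding D_def by simp
qed

lemma noncone_Gamma:
  assumes x1: "x1 \<in> \<Gamma>" and x2: "x2 \<in> \<Gamma>"
  shows "norm (fst x1 - fst x2) \<le> norm (snd x1 - snd x2)"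
proof (rule ccontr)
  assume neg: "\<not> ?thesis"
  define \<Delta> where "\<Delta> t = Phi t x1 - Phi t x2" for t
  define \<phi> where "\<phi> t = Lq (\<Delta> t)" for t
  have \<phi>0: "\<phi> 0 > 0"
    using neg unfolding \<phi>_def \<Delta>_def Lq_def flow0[OF x1] flow0[OF x2]
    by (simp add: not_le power_strict_mono)
  have dD: "(\<Delta> has_vector_derivative ((f (Phi t x1), g (Phi t x1)) - (f (Phi t x2), g (Phi t x2)))) (at t within {0..})"
    if "t \<ge> 0" for t
    unfolding \<Delta>_def by (intro has_vector_derivative_diff flow_deriv x1 x2 that)
  define \<phi>' where "\<phi>' t = 2 * inner (fst (\<Delta> t)) (f (Phi t x1) - f (Phi t x2))
                         - 2 * inner (snd (\<Delta> t)) (g (Phi t x1) - g (Phi t x2))" for t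
  have d\<phi>: "(\<phi> has_real_derivative \<phi>' t) (at t within {0..})" if "t \<ge> 0" for t
    unfolding \<phi>_def \<phi>'_def using Lq_deriv[OF dD[OF that]] by simp
  have grow: "\<phi>' t \<ge> (2 * c1) * \<phi> t" if t: "t \<ge> 0" "\<phi> t > 0" for t
  proof -
    have c: "norm (snd (\<Delta> t)) \<le> norm (fst (\<Delta> t))"
    proof -
      have "(norm (snd (\<Delta> t)))\<^sup>2 \<le> (norm (fst (\<Delta> t)))\<^sup>2" using t(2)[unfolded \<phi>_def Lq_def] by linarith
      then show ?thesis by (rule power2_le_imp_le) simp
    qed
    have "inner (fst (\<Delta> t)) (f (Phi t x1) - f (Phi t x2)) - inner (snd (\<Delta> t)) (g (Phi t x1) - g (Phi t x2))
          \<ge> c1 * (norm (fst (\<Delta> t)))\<^sup>2"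
      using mvt_cone[OF flow_U[OF x1 t(1)] flow_U[OF x2 t(1)]] c unfolding \<Delta>_def by simp
    moreover have "c1 * \<phi> t \<le> c1 * (norm (fst (\<Delta> t)))\<^sup>2"
      using H2_c1 unfolding \<phi>_def Lq_def by (intro mult_left_mono) auto
    ultimately show ?thesis unfolding \<phi>'_def by simp
  qed
  have lower: "\<phi> t \<ge> \<phi> 0 * exp ((2 * c1) * t)" if "t \<ge> 0" for t
    by (rule growth_exp[OF d\<phi> grow \<phi>0 that])
  have upper: "\<phi> t \<le> d\<^sup>2" if t: "t \<ge> 0" for t
  proof (cases "\<phi> t > 0")
    case True
    let ?y1 = "Phi t x1" and ?y2 = "Phi t x2"
    have "Lfun ?y1 ?y2 = \<phi> t"
      unfolding Lfun_def \<phi>_def Lq_def \<Delta>_def by (simp add: norm_minus_commute)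
    then have "?y1 \<in> Ccone ?y2 \<inter> U" using True flow_U[OF x1 t] unfolding Ccone_def by simp
    then have "?y1 \<in> Bbox d ?y2" using H1_cone flow_U[OF x2 t] by blast
    then have n: "norm (fst ?y1 - fst ?y2) \<le> d" unfolding Bbox_def by simp
    have "\<phi> t \<le> (norm (fst (\<Delta> t)))\<^sup>2" unfolding \<phi>_def Lq_def by simp
    also have "\<dots> \<le> d\<^sup>2" using n unfolding \<Delta>_def by (intro power_mono) auto
    finally show ?thesis .
  next
    case False then show ?thesis by (meson le_less_linear order.trans zero_le_power2)
  qed
  define t where "t = d\<^sup>2 / (2 * c1 * \<phi> 0)"
  have t0: "t \<ge> 0" unfolding t_def using H2_c1 \<phi>0 by simp
  have "\<phi> 0 * exp ((2 * c1) * t) \<ge> \<phi> 0 * (1 + (2 * c1) * t)"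
    using \<phi>0 by (intro mult_left_mono exp_ge_add_one_self) auto
  also have "\<phi> 0 * (1 + (2 * c1) * t) = \<phi> 0 + d\<^sup>2"
    unfolding t_def using H2_c1 \<phi>0 by (simp add: field_simps)
  finally have "\<phi> t > d\<^sup>2" using lower[OF t0] \<phi>0 by linarith
  with upper[OF t0] show False by simp
qed

lemma Gamma_graph: "x \<in> \<Gamma> \<Longrightarrow> fst x = h (snd x) \<and> snd x \<in> snd ` U"
  using h_graph by force

lemma graph_Gamma: "z \<in> snd ` U \<Longrightarrow> (h z, z) \<in> \<Gamma>"
  using h_graph by auto

lemma h_lip: "z1 \<in> snd ` U \<Longrightarrow> z2 \<in> snd ` U \<Longrightarrow> norm (h z1 - h z2) \<le> norm (z1 - z2)"
  using noncone_Gamma[OF graph_Gamma graph_Gamma] by simp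

end



context setting begin

definition "issol x w v \<longleftrightarrow> w 0 = v \<and>
   (\<forall>t\<ge>0. (w has_vector_derivative DFapp f' g' (Phi t x) (w t)) (at t within {0..}))"

definition "sol x v = (SOME w. issol x w v)"

definition "Qm x t v = (\<Sum>b\<in>Basis. (inner v b) *\<^sub>R sol x b t)"

lemma A_cont:
  assumes x: "x \<in> \<Gamma>" and dd: "continuous_on {0..} dd"
  shows "continuous_on {0..} (\<lambda>s. DFapp f' g' (Phi s x) (dd s))"
proof -
  have im: "(\<lambda>s. Phi s x) ` {0..} \<subseteq> U" using flow_U[OF x] by auto
  have cf: "continuous_on {0..} (\<lambda>s. f' (Phi s x))"
    by (rule continuous_on_compose2[OF H2_fcont flow_cont[OF x] im])
  have cg: "continuous_on {0..} (\<lambda>s. g' (Phi s x))"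
    by (rule continuous_on_compose2[OF H2_gcont flow_cont[OF x] im])
  show ?thesis unfolding DFapp_def
    by (intro continuous_intros cf cg dd)
qed

lemma A_bnd:
  assumes x: "x \<in> \<Gamma>"
  shows "\<exists>M. \<forall>t\<in>{0..T}. \<forall>v. norm (DFapp f' g' (Phi t x) v) \<le> M * norm v"
proof -
  have im: "(\<lambda>s. Phi s x) ` {0..} \<subseteq> U" using flow_U[OF x] by auto
  have c: "continuous_on {0..} (\<lambda>s. norm (f' (Phi s x)) + norm (g' (Phi s x)))"
    by (intro continuous_intros continuous_on_compose2[OF H2_fcont flow_cont[OF x] im]
        continuous_on_compose2[OF H2_gcont flow_cont[OF x] im])
  have cpt: "compact ((\<lambda>s. norm (f' (Phi s x)) + norm (g' (Phi s x))) ` {0..T})"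
    by (rule compact_continuous_image[OF continuous_on_subset[OF c]]) auto
  then obtain B where B: "\<forall>y\<in>(\<lambda>s. norm (f' (Phi s x)) + norm (g' (Phi s x))) ` {0..T}. \<bar>y\<bar> \<le> B"
    using bounded_real[THEN iffD1, OF compact_imp_bounded[OF cpt]] by blast
  show ?thesis
  proof (intro exI ballI allI)
    fix t v assume t: "t \<in> {0..T}"
    have "norm (DFapp f' g' (Phi t x) v) \<le> (norm (f' (Phi t x)) + norm (g' (Phi t x))) * norm v"
      by (rule DFapp_bound)
    also have "\<dots> \<le> B * norm v" using B t by (intro mult_right_mono) force+
    finally show "norm (DFapp f' g' (Phi t x) v) \<le> B * norm v" .
  qed
qed

lemma sol_ex: assumes x: "x \<in> \<Gamma>" shows "issol x (sol x v) v"
proof -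
  have "\<exists>w. issol x w v"
    using linode_exists[where A="\<lambda>t. DFapp f' g' (Phi t x)", OF DFapp_linear A_cont[OF x] A_bnd[OF x]]
    unfolding issol_def by blast
  then show ?thesis unfolding sol_def by (rule someI_ex)
qed

lemma sol_unique:
  assumes x: "x \<in> \<Gamma>" and w: "issol x w v" and w': "issol x w' v" and t: "t \<ge> 0"
  shows "w t = w' t"
proof -
  have "(\<lambda>t. w t - w' t) t = 0"
  proof (rule linode_unique[OF A_bnd[OF x]])
    fix s :: real assume s: "s \<ge> 0"
    have "((\<lambda>t. w t - w' t) has_vector_derivative
          DFapp f' g' (Phi s x) (w s) - DFapp f' g' (Phi s x) (w' s)) (at s within {0..})"
      using w w' s unfolding issol_def by (intro has_vector_derivative_diff) auto
    then show "((\<lambda>t. w t - w' t) has_vector_derivative DFapp f' g' (Phi s x) (w s - w' s)) (at s within {0..})"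
      by (simp add: linear_diff[OF DFapp_linear])
  qed (use w w' t in \<open>auto simp: issol_def\<close>)
  then show ?thesis by simp
qed

lemma Qm_linear: "linear (Qm x t)"
  unfolding Qm_def
  by (intro linearI) (auto simp: inner_add_left scaleR_add_left sum.distrib scaleR_sum_right)

lemma Qm_sol:
  assumes x: "x \<in> \<Gamma>"
  shows "issol x (\<lambda>t. Qm x t v) v"
  unfolding issol_def
proof (intro conjI allI impI)
  show "Qm x 0 v = v" unfolding Qm_def using sol_ex[OF x]
    by (simp add: issol_def euclidean_representation)
  fix t :: real assume t: "t \<ge> 0"
  have "((\<lambda>t. Qm x t v) has_vector_derivative (\<Sum>b\<in>Basis. inner v b *\<^sub>R DFapp f' g' (Phi t x) (sol x b t))) (at t within {0..})"
    unfolding Qm_def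
    using sol_ex[OF x] t unfolding issol_def
    by (intro has_vector_derivative_sum bounded_linear.has_vector_derivative[OF bounded_linear_scaleR_right]) auto
  also have "(\<Sum>b\<in>Basis. inner v b *\<^sub>R DFapp f' g' (Phi t x) (sol x b t)) = DFapp f' g' (Phi t x) (Qm x t v)"
    unfolding Qm_def
    by (simp add: linear_sum[OF DFapp_linear] linear_cmul[OF DFapp_linear] o_def)
  finally show "((\<lambda>t. Qm x t v) has_vector_derivative DFapp f' g' (Phi t x) (Qm x t v)) (at t within {0..})" .
qed

lemma sol_eq_Qm: "x \<in> \<Gamma> \<Longrightarrow> issol x w v \<Longrightarrow> t \<ge> 0 \<Longrightarrow> w t = Qm x t v"
  using sol_unique[OF _ _ Qm_sol] by blast

lemma Qm_0: "x \<in> \<Gamma> \<Longrightarrow> Qm x 0 v = v"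
  using Qm_sol unfolding issol_def by blast

definition "Tl x = {v. \<forall>t\<ge>0. Lq (Qm x t v) \<le> 0}"

lemma Tset_char:
  assumes x: "x \<in> \<Gamma>"
  shows "Tset f' g' Phi x = Tl x"
proof (intro set_eqI iffI)
  fix v assume "v \<in> Tset f' g' Phi x"
  then show "v \<in> Tl x" using Qm_sol[OF x, of v]
    unfolding Tset_def Tl_def issol_def by (auto simp: Lfun_0)
next
  fix v assume v: "v \<in> Tl x"
  show "v \<in> Tset f' g' Phi x"
    unfolding Tset_def
  proof (intro CollectI allI impI)
    fix w :: "real \<Rightarrow> 'a \<times> 'b" and t :: real
    assume w: "w 0 = v \<and> (\<forall>t\<ge>0. (w has_vector_derivative DFapp f' g' (Phi t x) (w t)) (at t within {0..}))"
      and t: "t \<ge> 0"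
    have "w t = Qm x t v" using sol_eq_Qm[OF x _ t] w unfolding issol_def by blast
    then show "Lfun (w t) 0 \<le> 0" using v t unfolding Tl_def by (simp add: Lfun_0)
  qed
qed

lemma Lq_sol_deriv:
  assumes w: "issol x w v" and t: "t \<ge> 0"
  shows "((\<lambda>t. Lq (w t)) has_real_derivative
     2 * inner (fst (w t)) (blinfun_apply (f' (Phi t x)) (w t))
     - 2 * inner (snd (w t)) (blinfun_apply (g' (Phi t x)) (w t))) (at t within {0..})"
  using Lq_deriv[of w _ t "{0..}"] w t unfolding issol_def DFapp_def by auto

lemma cone_persist:
  assumes x: "x \<in> \<Gamma>" and w: "issol x w v" and t0: "t0 \<ge> 0" and p: "Lq (w t0) > 0" and t: "t \<ge> t0"
  shows "Lq (w t) \<ge> Lq (w t0)"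
proof (rule persist_pos[where \<phi>="\<lambda>t. Lq (w t)" and \<phi>'="\<lambda>s. 2 * inner (fst (w s)) (blinfun_apply (f' (Phi s x)) (w s))
     - 2 * inner (snd (w s)) (blinfun_apply (g' (Phi s x)) (w s))", OF _ _ p t])
  fix s assume s: "s \<ge> t0"
  show "((\<lambda>t. Lq (w t)) has_real_derivative
     2 * inner (fst (w s)) (blinfun_apply (f' (Phi s x)) (w s))
     - 2 * inner (snd (w s)) (blinfun_apply (g' (Phi s x)) (w s))) (at s within {t0..})"
    by (rule has_field_derivative_subset[OF Lq_sol_deriv[OF w]]) (use s t0 in auto)
  assume pos: "Lq (w s) > 0"
  have c: "norm (snd (w s)) \<le> norm (fst (w s))"
  proof -
    have "(norm (snd (w s)))\<^sup>2 \<le> (norm (fst (w s)))\<^sup>2" using pos[unfolded Lq_def] by linarith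
    then show ?thesis by (rule power2_le_imp_le) simp
  qed
  have "c1 * (norm (fst (w s)))\<^sup>2 \<le> inner (fst (w s)) (blinfun_apply (f' (Phi s x)) (fst (w s), snd (w s)))
        - inner (snd (w s)) (blinfun_apply (g' (Phi s x)) (fst (w s), snd (w s)))"
    by (rule cone_est[OF flow_U[OF x] c]) (use s t0 in auto)
  moreover have "c1 * (norm (fst (w s)))\<^sup>2 \<ge> 0" using H2_c1 by simp
  ultimately show "0 \<le> 2 * inner (fst (w s)) (blinfun_apply (f' (Phi s x)) (w s))
     - 2 * inner (snd (w s)) (blinfun_apply (g' (Phi s x)) (w s))" by simp
qed

lemma noncone_back:
  assumes x: "x \<in> \<Gamma>" and w: "issol x w v" and tau: "Lq (w \<tau>) \<le> 0" and t: "0 \<le> t" "t \<le> \<tau>"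
  shows "Lq (w t) \<le> 0"
proof (rule ccontr)
  assume "\<not> ?thesis"
  then have "Lq (w t) > 0" by simp
  from cone_persist[OF x w t(1) this t(2)] this tau show False by simp
qed

end



lemma Lq_neg_le: "norm (fst v) \<le> norm (snd v) \<Longrightarrow> Lq v \<le> 0"
  using Lq_le0_iff by blast

lemma Lq_pos_imp: "Lq v > 0 \<Longrightarrow> norm (snd v) \<le> norm (fst v)"
proof -
  assume pos: "Lq v > 0"
  have "(norm (snd v))\<^sup>2 \<le> (norm (fst v))\<^sup>2" using pos[unfolded Lq_def] by linarith
  then show ?thesis by (rule power2_le_imp_le) simp
qed

lemma Lq_pos_fst: "Lq v > 0 \<Longrightarrow> norm (fst v) > 0"
  unfolding Lq_def by (metis diff_gt_0_iff_gt norm_ge_zero norm_zero power_zero_numeral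
      zero_less_norm_iff zero_less_power2 not_less_iff_gr_or_eq)

context setting begin

lemma ratio:
  assumes x: "x \<in> \<Gamma>" and w1: "issol x w1 v1" and p1: "Lq v1 > 0"
    and w2: "issol x w2 v2" and nc: "\<forall>t\<ge>0. Lq (w2 t) \<le> 0" and t: "t \<ge> 0"
  shows "(norm (snd (w2 t)))\<^sup>2 * exp (2 * c1 * t) * (norm (fst v1))\<^sup>2
         \<le> (norm (snd v2))\<^sup>2 * (norm (fst (w1 t)))\<^sup>2"
proof -
  have w10: "w1 0 = v1" and w20: "w2 0 = v2" using w1 w2 unfolding issol_def by auto
  have cone1: "Lq (w1 s) > 0" if "s \<ge> 0" for s
    using cone_persist[OF x w1 order_refl _ that] p1 w10 by force
  define p where "p s = (norm (fst (w1 s)))\<^sup>2" for s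
  define q where "q s = (norm (snd (w2 s)))\<^sup>2 * exp (2 * c1 * s)" for s
  define p' where "p' s = 2 * inner (fst (w1 s)) (blinfun_apply (f' (Phi s x)) (w1 s))" for s
  define q' where "q' s = 2 * inner (snd (w2 s)) (blinfun_apply (g' (Phi s x)) (w2 s)) * exp (2 * c1 * s)
                          + (norm (snd (w2 s)))\<^sup>2 * (exp (2 * c1 * s) * (2 * c1))" for s
  define \<kappa> where "\<kappa> s = 2 * (alpha (Phi s x) - Bn (Phi s x))" for s
  have ppos: "p s > 0" if "s \<ge> 0" for s
    unfolding p_def using Lq_pos_fst[OF cone1[OF that]] by simp
  have dp: "(p has_real_derivative p' s) (at s within {0..})" if "s \<ge> 0" for s
  proof -
    have "(w1 has_vector_derivative DFapp f' g' (Phi s x) (w1 s)) (at s within {0..})"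
      using w1 that unfolding issol_def by blast
    from norm2_deriv[OF vd_fst[OF this]] show ?thesis
      unfolding p_def p'_def by (simp add: DFapp_def)
  qed
  have dq: "(q has_real_derivative q' s) (at s within {0..})" if "s \<ge> 0" for s
  proof -
    have W2: "(w2 has_vector_derivative DFapp f' g' (Phi s x) (w2 s)) (at s within {0..})"
      using w2 that unfolding issol_def by blast
    have E: "((\<lambda>s. exp (2 * c1 * s)) has_real_derivative exp (2 * c1 * s) * (2 * c1)) (at s within {0..})"
      by (auto intro!: derivative_eq_intros)
    from DERIV_mult[OF norm2_deriv[OF vd_snd[OF W2]] E] show ?thesis
      unfolding q_def q'_def by (simp add: DFapp_def mult.commute mult.left_commute)
  qed
  have pk: "p' s \<ge> \<kappa> s * p s" if "s \<ge> 0" for s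
  proof -
    have c: "norm (snd (w1 s)) \<le> norm (fst (w1 s))" using Lq_pos_imp[OF cone1[OF that]] .
    have "inner (fst (w1 s)) (blinfun_apply (f' (Phi s x)) (fst (w1 s), snd (w1 s)))
          \<ge> (alpha (Phi s x) - Bn (Phi s x)) * (norm (fst (w1 s)))\<^sup>2"
      by (rule cone_fa[OF flow_U[OF x that] c])
    then show ?thesis unfolding p'_def \<kappa>_def p_def by (simp add: algebra_simps)
  qed
  have qk: "q' s \<le> \<kappa> s * q s" if "s \<ge> 0" for s
  proof -
    have c: "norm (fst (w2 s)) \<le> norm (snd (w2 s))" using nc that Lq_le0_iff by blast
    have I: "inner (snd (w2 s)) (blinfun_apply (g' (Phi s x)) (fst (w2 s), snd (w2 s)))
          \<le> (alpha (Phi s x) - Bn (Phi s x) - c1) * (norm (snd (w2 s)))\<^sup>2"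
      by (rule noncone_gz[OF flow_U[OF x that] c])
    have e: "exp (2 * c1 * s) > 0" by simp
    have "q' s = (2 * inner (snd (w2 s)) (blinfun_apply (g' (Phi s x)) (w2 s))
                 + 2 * c1 * (norm (snd (w2 s)))\<^sup>2) * exp (2 * c1 * s)"
      unfolding q'_def by (simp add: algebra_simps)
    also have "\<dots> \<le> (2 * ((alpha (Phi s x) - Bn (Phi s x) - c1) * (norm (snd (w2 s)))\<^sup>2)
                 + 2 * c1 * (norm (snd (w2 s)))\<^sup>2) * exp (2 * c1 * s)"
    proof (rule mult_right_mono)
      show "2 * inner (snd (w2 s)) (blinfun_apply (g' (Phi s x)) (w2 s)) + 2 * c1 * (norm (snd (w2 s)))\<^sup>2
         \<le> 2 * ((alpha (Phi s x) - Bn (Phi s x) - c1) * (norm (snd (w2 s)))\<^sup>2) + 2 * c1 * (norm (snd (w2 s)))\<^sup>2"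
        using I by simp
    qed (use e in simp)
    also have "\<dots> = \<kappa> s * q s" unfolding \<kappa>_def q_def by (simp add: algebra_simps)
    finally show ?thesis .
  qed
  have qnn: "q s \<ge> 0" for s unfolding q_def by simp
  have kpos: "\<kappa> s \<ge> 0" if "s \<ge> 0" for s
    using alpha_Bn_pos[OF flow_U[OF x that]] H2_c1 unfolding \<kappa>_def by simp
  define R where "R s = q s / p s" for s
  define R' where "R' s = (q' s * p s - q s * p' s) / (p s * p s)" for s
  have dR: "((\<lambda>s. - R s) has_real_derivative - R' s) (at s within {0..})" if "s \<ge> 0" for s
    unfolding R_def R'_def
    using DERIV_minus[OF DERIV_divide[OF dq[OF that] dp[OF that]]] ppos[OF that]
    by simp
  have "- R 0 \<le> - R t"
  proof (rule deriv_nonneg_incr[OF t _ dR])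
    fix s :: real assume s: "0 < s" "s < t"
    then have s0: "s \<ge> 0" by simp
    have "q' s * p s \<le> \<kappa> s * q s * p s"
      using qk[OF s0] ppos[OF s0] by (intro mult_right_mono) auto
    also have "\<dots> = q s * (\<kappa> s * p s)" by (simp add: algebra_simps)
    also have "\<dots> \<le> q s * p' s" using pk[OF s0] qnn by (intro mult_left_mono) auto
    finally have "q' s * p s - q s * p' s \<le> 0" by simp
    moreover have "p s * p s > 0" using ppos[OF s0] by simp
    ultimately show "0 \<le> - R' s" unfolding R'_def by (simp add: divide_nonpos_pos)
  qed auto
  then have "q t / p t \<le> q 0 / p 0" unfolding R_def by simp
  then have "q t * p 0 \<le> q 0 * p t"
    using ppos[OF t] ppos[OF order_refl] by (simp add: divide_le_eq field_simps)
  then show ?thesis unfolding q_def p_def w10 w20 by simp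
qed

lemma ratio_norm:
  assumes x: "x \<in> \<Gamma>" and w1: "issol x w1 v1" and p1: "Lq v1 > 0"
    and w2: "issol x w2 v2" and nc: "\<forall>t\<ge>0. Lq (w2 t) \<le> 0" and t: "t \<ge> 0"
  shows "norm (snd (w2 t)) * exp (c1 * t) * norm (fst v1) \<le> norm (snd v2) * norm (fst (w1 t))"
proof (rule power2_le_imp_le)
  have "exp (c1 * t) ^ 2 = exp (2 * c1 * t)" by (simp add: exp_double[symmetric] algebra_simps)
  then show "(norm (snd (w2 t)) * exp (c1 * t) * norm (fst v1))\<^sup>2 \<le> (norm (snd v2) * norm (fst (w1 t)))\<^sup>2"
    using ratio[OF assms] by (simp add: power_mult_distrib)
qed simp

lemma Qm_issol: "x \<in> \<Gamma> \<Longrightarrow> issol x (\<lambda>t. Qm x t v) v" by (rule Qm_sol)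

lemma Qm_add: "Qm x t (u + v) = Qm x t u + Qm x t v" by (rule linear_add[OF Qm_linear])
lemma Qm_scale: "Qm x t (c *\<^sub>R v) = c *\<^sub>R Qm x t v" by (rule linear_scale[OF Qm_linear])
lemma Qm_zero: "Qm x t 0 = 0" by (rule linear_0[OF Qm_linear])

lemma zero_Tl: "0 \<in> Tl x" unfolding Tl_def by (simp add: Qm_zero Lq_def)

lemma key_contra:
  assumes x: "x \<in> \<Gamma>" and e: "e \<noteq> 0"
    and v1: "v1 \<in> Tl x" and v2: "v2 \<in> Tl x" and v3: "v3 \<in> Tl x"
    and eq: "(e, 0) = a1 *\<^sub>R v1 + a2 *\<^sub>R v2 + a3 *\<^sub>R v3"
  shows False
proof -
  define W where "W t = Qm x t (e, 0)" for t
  have Wsol: "issol x W (e, 0)" unfolding W_def by (rule Qm_sol[OF x])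
  have LW: "Lq (e, 0) > 0" using e by (simp add: Lq_def)
  have rn: "norm (snd (Qm x t v)) * exp (c1 * t) * norm e \<le> norm (snd v) * norm (fst (W t))"
    if v: "v \<in> Tl x" and t: "t \<ge> 0" for v t
    using ratio_norm[OF x Wsol LW Qm_sol[OF x, of v] _ t] v unfolding Tl_def by simp
  have nb: "norm (fst (Qm x t v)) \<le> norm (snd (Qm x t v))" if v: "v \<in> Tl x" and t: "t \<ge> 0" for v t
    using v t unfolding Tl_def by (simp add: Lq_le0_iff)
  define K where "K = \<bar>a1\<bar> * norm (snd v1) + \<bar>a2\<bar> * norm (snd v2) + \<bar>a3\<bar> * norm (snd v3)"
  have bound: "exp (c1 * t) * norm e \<le> K" if t: "t \<ge> 0" for t
  proof -
    let ?F = "norm (fst (W t))" and ?E = "exp (c1 * t) * norm e"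
    have Fpos: "?F > 0"
      using Lq_pos_fst[of "W t"] cone_persist[OF x Wsol order_refl _ t] Wsol LW
      unfolding issol_def by force
    have Wt: "W t = a1 *\<^sub>R Qm x t v1 + a2 *\<^sub>R Qm x t v2 + a3 *\<^sub>R Qm x t v3"
      unfolding W_def eq by (simp add: Qm_add Qm_scale)
    have E0: "?E \<ge> 0" by simp
    have "?F \<le> \<bar>a1\<bar> * norm (fst (Qm x t v1)) + \<bar>a2\<bar> * norm (fst (Qm x t v2)) + \<bar>a3\<bar> * norm (fst (Qm x t v3))"
      unfolding Wt by (simp add: norm_triangle_le norm_triangle_ineq add_mono)
    also have "\<dots> \<le> \<bar>a1\<bar> * norm (snd (Qm x t v1)) + \<bar>a2\<bar> * norm (snd (Qm x t v2)) + \<bar>a3\<bar> * norm (snd (Qm x t v3))"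
      using nb[OF v1 t] nb[OF v2 t] nb[OF v3 t] by (intro add_mono mult_left_mono) auto
    finally have "?F * ?E \<le> (\<bar>a1\<bar> * norm (snd (Qm x t v1)) + \<bar>a2\<bar> * norm (snd (Qm x t v2)) + \<bar>a3\<bar> * norm (snd (Qm x t v3))) * ?E"
      using E0 by (rule mult_right_mono)
    also have "\<dots> = \<bar>a1\<bar> * (norm (snd (Qm x t v1)) * exp (c1 * t) * norm e)
                    + \<bar>a2\<bar> * (norm (snd (Qm x t v2)) * exp (c1 * t) * norm e)
                    + \<bar>a3\<bar> * (norm (snd (Qm x t v3)) * exp (c1 * t) * norm e)"
      by (simp add: algebra_simps)
    also have "\<dots> \<le> \<bar>a1\<bar> * (norm (snd v1) * ?F) + \<bar>a2\<bar> * (norm (snd v2) * ?F) + \<bar>a3\<bar> * (norm (snd v3) * ?F)"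
      using rn[OF v1 t] rn[OF v2 t] rn[OF v3 t] by (intro add_mono mult_left_mono) auto
    also have "\<dots> = K * ?F" unfolding K_def by (simp add: algebra_simps)
    finally have "?E * ?F \<le> K * ?F" by (simp add: mult.commute)
    then show ?thesis using Fpos by simp
  qed
  have K0: "K \<ge> 0" unfolding K_def by simp
  define t where "t = K / (c1 * norm e)"
  have t0: "t \<ge> 0" unfolding t_def using K0 H2_c1 by simp
  have "exp (c1 * t) * norm e \<ge> (1 + c1 * t) * norm e"
    by (intro mult_right_mono exp_ge_add_one_self) auto
  also have "(1 + c1 * t) * norm e = norm e + K"
    unfolding t_def using H2_c1 e by (simp add: field_simps)
  moreover have "norm e > 0" using e by simp
  ultimately have "exp (c1 * t) * norm e > K" by linarith
  with bound[OF t0] show False by simp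
qed

end



lemma Lq_cont: "isCont Lq v"
proof -
  have "continuous_on UNIV (\<lambda>v::'a::real_normed_vector \<times> 'b::real_normed_vector. (norm (fst v))\<^sup>2 - (norm (snd v))\<^sup>2)"
    by (intro continuous_intros)
  then show ?thesis unfolding Lq_def[abs_def] by (simp add: continuous_on_eq_continuous_at)
qed

context setting begin

lemma Tl_exists:
  assumes x: "x \<in> \<Gamma>"
  shows "\<exists>a. (a, z) \<in> Tl x"
proof -
  have step: "\<exists>a. norm a \<le> norm z \<and> (\<forall>t. 0 \<le> t \<and> t \<le> real k \<longrightarrow> Lq (Qm x t (a, z)) \<le> 0)" for k :: nat
  proof -
    define L where "L a = fst (Qm x (real k) (a, 0))" for a :: 'a
    have linL: "linear L"
    proof (rule linearI)
      fix a b :: 'a and c :: real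
      have e1: "(a + b, 0::'b) = (a, 0) + (b, 0)" by simp
      show "L (a + b) = L a + L b" unfolding L_def e1 Qm_add by simp
      have e2: "(c *\<^sub>R a, 0::'b) = c *\<^sub>R (a, 0)" by simp
      show "L (c *\<^sub>R a) = c *\<^sub>R L a" unfolding L_def e2 Qm_scale by simp
    qed
    have injL: "inj L"
    proof (subst linear_injective_0[OF linL], intro allI impI)
      fix a assume La: "L a = 0"
      show "a = 0"
      proof (rule ccontr)
        assume a: "a \<noteq> 0"
        have p: "Lq (Qm x 0 (a, 0::'b)) > 0" using a by (simp add: Qm_0[OF x] Lq_def)
        have "Lq (Qm x (real k) (a, 0)) \<ge> Lq (Qm x 0 (a, 0::'b))"
          using cone_persist[OF x Qm_sol[OF x] order_refl p] by simp
        moreover have "Lq (Qm x (real k) (a, 0)) \<le> 0" using La unfolding L_def Lq_def by simp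
        ultimately show False using p by simp
      qed
    qed
    have "surj L" by (rule linear_inj_imp_surj[OF linL injL])
    then obtain a where a: "L a = - fst (Qm x (real k) (0, z))" by (metis surjD)
    have "(a, z) = (a, 0) + (0, z)" by simp
    then have "fst (Qm x (real k) (a, z)) = L a + fst (Qm x (real k) (0, z))"
      unfolding L_def by (metis Qm_add fst_add)
    then have fz: "fst (Qm x (real k) (a, z)) = 0" using a by simp
    then have "Lq (Qm x (real k) (a, z)) \<le> 0" by (simp add: Lq_def)
    then have nc: "Lq (Qm x t (a, z)) \<le> 0" if "0 \<le> t" "t \<le> real k" for t
      using noncone_back[OF x Qm_sol[OF x] _ that] by blast
    have "Lq (a, z) \<le> 0" using nc[of 0] Qm_0[OF x] by simp
    then have "norm a \<le> norm z" by (simp add: Lq_le0_iff)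
    then show ?thesis using nc by blast
  qed
  then obtain A where A: "\<And>k. norm (A k) \<le> norm z"
      and Anc: "\<And>k t. 0 \<le> t \<Longrightarrow> t \<le> real k \<Longrightarrow> Lq (Qm x t (A k, z)) \<le> 0"
    by metis
  have "seq_compact (cball (0::'a) (norm z))"
    by (rule compact_imp_seq_compact[OF compact_cball])
  moreover have "\<forall>n. A n \<in> cball 0 (norm z)" using A by simp
  ultimately obtain l r where r: "strict_mono r" and lim: "(A \<circ> r) \<longlonglongrightarrow> l"
    by (rule seq_compactE)
  have "\<forall>t\<ge>0. Lq (Qm x t (l, z)) \<le> 0"
  proof (intro allI impI)
    fix t :: real assume t: "t \<ge> 0"
    have bl: "bounded_linear (Qm x t)" using Qm_linear linear_conv_bounded_linear by blast
    have l1: "(\<lambda>n. (A (r n), z)) \<longlonglongrightarrow> (l, z)" using lim by (intro tendsto_intros) (simp add: o_def)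
    have l2: "(\<lambda>n. Qm x t (A (r n), z)) \<longlonglongrightarrow> Qm x t (l, z)"
      by (rule isCont_tendsto_compose[OF linear_continuous_at[OF bl] l1])
    have l3: "(\<lambda>n. Lq (Qm x t (A (r n), z))) \<longlonglongrightarrow> Lq (Qm x t (l, z))"
      by (rule isCont_tendsto_compose[OF Lq_cont l2])
    show "Lq (Qm x t (l, z)) \<le> 0"
    proof (rule LIMSEQ_le_const2[OF l3], intro exI allI impI)
      fix n assume n: "n \<ge> nat \<lceil>t\<rceil>"
      have "real n \<le> real (r n)" using seq_suble[OF r, of n] by simp
      moreover have "t \<le> real n" using n by linarith
      ultimately show "Lq (Qm x t (A (r n), z)) \<le> 0" using Anc t by auto
    qed
  qed
  then show ?thesis unfolding Tl_def by blast
qed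

definition "Hm x z = (SOME a. (a, z) \<in> Tl x)"

lemma Hm_in: "x \<in> \<Gamma> \<Longrightarrow> (Hm x z, z) \<in> Tl x"
  unfolding Hm_def using Tl_exists by (rule someI_ex)

lemma Tl_unique:
  assumes x: "x \<in> \<Gamma>" and a: "(a, z) \<in> Tl x"
  shows "a = Hm x z"
proof (rule ccontr)
  assume ne: "a \<noteq> Hm x z"
  have "(a - Hm x z, 0) = 1 *\<^sub>R (a, z) + (-1) *\<^sub>R (Hm x z, z) + 0 *\<^sub>R 0" by simp
  from key_contra[OF x _ a Hm_in[OF x] zero_Tl this] ne show False by simp
qed

lemma Hm_linear:
  assumes x: "x \<in> \<Gamma>"
  shows "linear (Hm x)"
proof (rule linearI)
  fix z1 z2 :: 'b
  show "Hm x (z1 + z2) = Hm x z1 + Hm x z2"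
  proof (rule ccontr)
    assume ne: "Hm x (z1 + z2) \<noteq> Hm x z1 + Hm x z2"
    have "(Hm x z1 + Hm x z2 - Hm x (z1 + z2), 0) = 1 *\<^sub>R (Hm x z1, z1) + 1 *\<^sub>R (Hm x z2, z2) + (-1) *\<^sub>R (Hm x (z1 + z2), z1 + z2)"
      by simp
    from key_contra[OF x _ Hm_in[OF x] Hm_in[OF x] Hm_in[OF x] this] ne show False by simp
  qed
next
  fix c :: real and z :: 'b
  show "Hm x (c *\<^sub>R z) = c *\<^sub>R Hm x z"
  proof (rule ccontr)
    assume ne: "Hm x (c *\<^sub>R z) \<noteq> c *\<^sub>R Hm x z"
    have "(c *\<^sub>R Hm x z - Hm x (c *\<^sub>R z), 0) = c *\<^sub>R (Hm x z, z) + (-1) *\<^sub>R (Hm x (c *\<^sub>R z), c *\<^sub>R z) + 0 *\<^sub>R 0"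
      by simp
    from key_contra[OF x _ Hm_in[OF x] Hm_in[OF x] zero_Tl this] ne show False by simp
  qed
qed

lemma Tset_graph:
  assumes x: "x \<in> \<Gamma>"
  shows "Tset f' g' Phi x = {(Hm x z, z) | z. True}"
  unfolding Tset_char[OF x]
proof (intro set_eqI iffI)
  fix v assume "v \<in> Tl x"
  then have "v = (Hm x (snd v), snd v)" using Tl_unique[OF x, of "fst v" "snd v"] by (simp add: prod_eq_iff)
  then show "v \<in> {(Hm x z, z) | z. True}" by blast
next
  fix v assume "v \<in> {(Hm x z, z) | z. True}"
  then show "v \<in> Tl x" using Hm_in[OF x] by auto
qed

lemma Hmap_eq:
  assumes x: "x \<in> \<Gamma>"
  shows "Hmap f' g' Phi x = Hm x"
  unfolding Hmap_def
proof (rule the_equality)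
  show "linear (Hm x) \<and> Tset f' g' Phi x = {(Hm x z, z) | z. True}"
    using Hm_linear[OF x] Tset_graph[OF x] by blast
next
  fix H assume H: "linear H \<and> Tset f' g' Phi x = {(H z, z) | z. True}"
  show "H = Hm x"
  proof
    fix z
    have "(H z, z) \<in> Tl x" using H Tset_char[OF x] by blast
    then show "H z = Hm x z" by (rule Tl_unique[OF x])
  qed
qed

end



context setting begin

lemma FF_der: "p \<in> U \<Longrightarrow> ((\<lambda>u. (f u, g u)) has_derivative DFapp f' g' p) (at p within S)"
  unfolding DFapp_def[abs_def]
  by (rule has_derivative_Pair[OF f_der g_der]) auto

lemma DF_bl: "bounded_linear (DFapp f' g' p)"
  using DFapp_linear linear_conv_bounded_linear by blast

lemma FF_lip:
  assumes S: "convex S" "S \<subseteq> U" and M: "\<And>p. p \<in> S \<Longrightarrow> norm (f' p) + norm (g' p) \<le> M"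
    and y: "y \<in> S" and y': "y' \<in> S"
  shows "norm ((f y', g y') - (f y, g y)) \<le> M * norm (y' - y)"
proof (rule differentiable_bound[OF S(1) _ _ y' y])
  fix p assume p: "p \<in> S"
  show "((\<lambda>u. (f u, g u)) has_derivative DFapp f' g' p) (at p within S)"
    using FF_der[of p S] p S(2) by blast
  show "onorm (DFapp f' g' p) \<le> M"
  proof (rule onorm_le)
    fix v
    show "norm (DFapp f' g' p v) \<le> M * norm v"
      using DFapp_bound[of f' g' p v] M[OF p] by (meson mult_right_mono norm_ge_zero order_trans)
  qed
qed

lemma FF_lin:
  assumes S: "convex S" "S \<subseteq> U" and y: "y \<in> S" and y': "y' \<in> S"
    and E: "\<And>p. p \<in> S \<Longrightarrow> norm (f' p - f' y) + norm (g' p - g' y) \<le> \<epsilon>"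
  shows "norm ((f y', g y') - (f y, g y) - DFapp f' g' y (y' - y)) \<le> \<epsilon> * norm (y' - y)"
proof -
  have "norm ((\<lambda>u. (f u, g u) - DFapp f' g' y u) y' - (\<lambda>u. (f u, g u) - DFapp f' g' y u) y) \<le> \<epsilon> * norm (y' - y)"
  proof (rule differentiable_bound[OF S(1) _ _ y' y])
    fix p assume p: "p \<in> S"
    show "((\<lambda>u. (f u, g u) - DFapp f' g' y u) has_derivative (\<lambda>v. DFapp f' g' p v - DFapp f' g' y v)) (at p within S)"
      using FF_der[of p S] p S(2) bounded_linear_imp_has_derivative[OF DF_bl[of y]]
      by (auto intro!: has_derivative_diff)
    show "onorm (\<lambda>v. DFapp f' g' p v - DFapp f' g' y v) \<le> \<epsilon>"
    proof (rule onorm_le)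
      fix v
      show "norm (DFapp f' g' p v - DFapp f' g' y v) \<le> \<epsilon> * norm v"
        using DFapp_diff_bound[of f' g' p v y] E[OF p] by (meson mult_right_mono norm_ge_zero order_trans)
    qed
  qed
  moreover have "(\<lambda>u. (f u, g u) - DFapp f' g' y u) y' - (\<lambda>u. (f u, g u) - DFapp f' g' y u) y
      = (f y', g y') - (f y, g y) - DFapp f' g' y (y' - y)"
    by (simp add: linear_diff[OF DFapp_linear])
  ultimately show ?thesis by simp
qed

lemma local_nbhd:
  assumes x0: "x0 \<in> \<Gamma>" and tau: "\<tau> \<ge> 0"
  shows "\<exists>\<delta>>0. \<exists>N. compact N \<and> N \<subseteq> U \<and> (\<forall>s\<in>{0..\<tau>}. cball (Phi s x0) \<delta> \<subseteq> N)"
proof -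
  define C where "C = (\<lambda>s. Phi s x0) ` {0..\<tau>}"
  have cC: "compact C" unfolding C_def
    by (rule compact_continuous_image[OF continuous_on_subset[OF flow_cont[OF x0]]]) auto
  have CU: "C \<subseteq> U" unfolding C_def using flow_U[OF x0] by auto
  obtain d where d: "d > 0" and dd: "\<forall>x\<in>C. \<forall>y\<in>- U. d \<le> dist x y"
    using separate_compact_closed[OF cC _ , of "- U"] H1_open CU by auto
  define N where "N = {y + b | y b. y \<in> C \<and> b \<in> cball 0 (d/2)}"
  have cN: "compact N" unfolding N_def by (rule compact_sums[OF cC compact_cball])
  have NU: "N \<subseteq> U"
  proof
    fix z assume "z \<in> N"
    then obtain y b where z: "z = y + b" and y: "y \<in> C" and b: "norm b \<le> d/2"
      unfolding N_def by auto
    show "z \<in> U"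
    proof (rule ccontr)
      assume "z \<notin> U"
      then have "d \<le> dist y z" using dd y by auto
      moreover have "dist y z = norm b" using z by (simp add: dist_norm)
      ultimately show False using b d by simp
    qed
  qed
  have "\<forall>s\<in>{0..\<tau>}. cball (Phi s x0) (d/2) \<subseteq> N"
  proof (intro ballI subsetI)
    fix s z assume s: "s \<in> {0..\<tau>}" and z: "z \<in> cball (Phi s x0) (d/2)"
    have "z = Phi s x0 + (z - Phi s x0)" by simp
    moreover have "Phi s x0 \<in> C" using s C_def by auto
    moreover have "z - Phi s x0 \<in> cball 0 (d/2)" using z by (simp add: dist_norm norm_minus_commute)
    ultimately show "z \<in> N" unfolding N_def by blast
  qed
  then show ?thesis using cN NU d by (intro exI[of _ "d/2"]) auto
qed

end



context setting begin

lemma linearization: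
  assumes x0: "x0 \<in> \<Gamma>" and tau: "\<tau> \<ge> 0" and eps: "\<epsilon> > 0"
  shows "\<exists>\<rho>>0. \<forall>x\<in>\<Gamma>. norm (x - x0) < \<rho> \<longrightarrow>
            norm (Phi \<tau> x - Phi \<tau> x0 - Qm x0 \<tau> (x - x0)) \<le> \<epsilon> * norm (x - x0)"
proof -
  obtain \<delta> N where \<delta>: "\<delta> > 0" and cN: "compact N" and NU: "N \<subseteq> U"
    and ball: "\<forall>s\<in>{0..\<tau>}. cball (Phi s x0) \<delta> \<subseteq> N"
    using local_nbhd[OF x0 tau] by blast
  have cf: "continuous_on N f'" by (rule continuous_on_subset[OF H2_fcont NU])
  have cg: "continuous_on N g'" by (rule continuous_on_subset[OF H2_gcont NU])
  have cpt: "compact ((\<lambda>p. norm (f' p) + norm (g' p)) ` N)"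
    by (rule compact_continuous_image[OF _ cN]) (intro continuous_intros cf cg)
  obtain M0 where M0: "\<forall>y\<in>(\<lambda>p. norm (f' p) + norm (g' p)) ` N. \<bar>y\<bar> \<le> M0"
    using bounded_real[THEN iffD1, OF compact_imp_bounded[OF cpt]] by blast
  define M where "M = max M0 0"
  have M0le: "M \<ge> 0" unfolding M_def by simp
  have MN: "norm (f' p) + norm (g' p) \<le> M" if "p \<in> N" for p
    using M0 that unfolding M_def by force
  define K where "K = exp (M * \<tau>)"
  define K2 where "K2 = exp ((M + 1/2) * \<tau>)"
  have K1: "K \<ge> 1" unfolding K_def using M0le tau by simp
  have K21: "K2 \<ge> 1" unfolding K2_def using M0le tau by simp
  define \<epsilon>1 where "\<epsilon>1 = \<epsilon> / (K * K2)"
  have e1: "\<epsilon>1 > 0" unfolding \<epsilon>1_def using eps K1 K21 by simp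
  obtain \<eta>1 where \<eta>1: "\<eta>1 > 0" and u1: "\<forall>p\<in>N. \<forall>q\<in>N. dist q p < \<eta>1 \<longrightarrow> dist (f' q) (f' p) < \<epsilon>1 / 2"
    using compact_uniformly_continuous[OF cf cN] e1 unfolding uniformly_continuous_on_def
    by (meson half_gt_zero)
  obtain \<eta>2 where \<eta>2: "\<eta>2 > 0" and u2: "\<forall>p\<in>N. \<forall>q\<in>N. dist q p < \<eta>2 \<longrightarrow> dist (g' q) (g' p) < \<epsilon>1 / 2"
    using compact_uniformly_continuous[OF cg cN] e1 unfolding uniformly_continuous_on_def
    by (meson half_gt_zero)
  define \<eta> where "\<eta> = min \<eta>1 \<eta>2"
  have \<eta>: "\<eta> > 0" unfolding \<eta>_def using \<eta>1 \<eta>2 by simp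
  have unif: "norm (f' q - f' p) + norm (g' q - g' p) \<le> \<epsilon>1" if "p \<in> N" "q \<in> N" "dist q p < \<eta>" for p q
    using u1 u2 that unfolding \<eta>_def by (force simp: dist_norm)
  define \<rho> where "\<rho> = min \<delta> \<eta> / K"
  have \<rho>: "\<rho> > 0" unfolding \<rho>_def using \<delta> \<eta> K1 by simp
  show ?thesis
  proof (intro exI[of _ \<rho>] conjI ballI impI)
    show "\<rho> > 0" by (rule \<rho>)
    fix x assume x: "x \<in> \<Gamma>" and xr: "norm (x - x0) < \<rho>"
    define \<Delta> where "\<Delta> s = Phi s x - Phi s x0" for s
    define n0 where "n0 = norm (x - x0)"
    have \<Delta>0: "\<Delta> 0 = x - x0" unfolding \<Delta>_def using flow0[OF x] flow0[OF x0] by simp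
    have n0K: "n0 * K < min \<delta> \<eta>" using xr K1 unfolding n0_def \<rho>_def by (simp add: field_simps)
    have n0: "n0 \<ge> 0" unfolding n0_def by simp
    define FD where "FD s = (f (Phi s x), g (Phi s x)) - (f (Phi s x0), g (Phi s x0))" for s
    have d\<Delta>: "(\<Delta> has_vector_derivative FD s) (at s within {0..})" if "s \<ge> 0" for s
      unfolding \<Delta>_def FD_def by (intro has_vector_derivative_diff flow_deriv x x0 that)
    have c\<Delta>: "continuous_on {0..} \<Delta>" by (rule cont_from_deriv_nonneg[OF d\<Delta>])
    have cent: "Phi s x0 \<in> N" if "s \<in> {0..\<tau>}" for s
      using ball that \<delta> by (meson centre_in_cball less_imp_le subsetD)
    have FDlip: "norm (FD t) \<le> M * norm (\<Delta> t)" if t: "t \<in> {0..\<tau>}" "norm (\<Delta> t) \<le> \<delta>" for t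
    proof -
      have S: "convex (cball (Phi t x0) \<delta>)" "cball (Phi t x0) \<delta> \<subseteq> U"
        using ball t(1) NU by blast+
      have "norm ((f (Phi t x), g (Phi t x)) - (f (Phi t x0), g (Phi t x0))) \<le> M * norm (Phi t x - Phi t x0)"
      proof (rule FF_lip[OF S])
        fix p assume "p \<in> cball (Phi t x0) \<delta>"
        then have "p \<in> N" using ball t(1) by blast
        then show "norm (f' p) + norm (g' p) \<le> M" by (rule MN)
      next
        show "Phi t x \<in> cball (Phi t x0) \<delta>" using t(2) by (simp add: dist_norm \<Delta>_def norm_minus_commute)
      qed (use \<delta> in simp)
      then show ?thesis unfolding FD_def \<Delta>_def .
    qed
    have gron: "(norm (\<Delta> s1))\<^sup>2 \<le> n0\<^sup>2 * exp ((2 * M) * s1)"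
      if s1: "s1 \<in> {0..\<tau>}" and sm: "\<forall>t. 0 < t \<and> t < s1 \<longrightarrow> norm (\<Delta> t) < \<delta>" for s1
    proof -
      have "(\<lambda>t. (norm (\<Delta> t))\<^sup>2) s1 \<le> (\<lambda>t. (norm (\<Delta> t))\<^sup>2) 0 * exp ((2 * M) * s1)"
      proof (rule gronwall[where S="{0..}"])
        fix t :: real assume "0 \<le> t" "t \<le> s1"
        then show "((\<lambda>t. (norm (\<Delta> t))\<^sup>2) has_real_derivative 2 * inner (\<Delta> t) (FD t)) (at t within {0..})"
          using norm2_deriv[OF d\<Delta>] by auto
      next
        fix t :: real assume t: "0 < t" "t < s1"
        have tt: "t \<in> {0..\<tau>}" using t s1 by auto
        have "inner (\<Delta> t) (FD t) \<le> norm (\<Delta> t) * norm (FD t)" by (rule norm_cauchy_schwarz)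
        also have "\<dots> \<le> norm (\<Delta> t) * (M * norm (\<Delta> t))"
          using FDlip[OF tt] sm t by (intro mult_left_mono) auto
        finally show "2 * inner (\<Delta> t) (FD t) \<le> 2 * M * (norm (\<Delta> t))\<^sup>2"
          by (simp add: power2_eq_square algebra_simps)
      qed (use s1 in auto)
      then show ?thesis using \<Delta>0 unfolding n0_def by simp
    qed
    have expK: "exp ((2 * M) * s) \<le> K\<^sup>2" if "s \<in> {0..\<tau>}" for s
    proof -
      have "exp ((2 * M) * s) \<le> exp ((2 * M) * \<tau>)" using that M0le by (simp add: mult_left_mono)
      also have "\<dots> = K\<^sup>2" unfolding K_def by (simp add: exp_double[symmetric] algebra_simps)
      finally show ?thesis .
    qed
    have small: "norm (\<Delta> s) < \<delta>" if "s \<in> {0..\<tau>}" for s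
    proof (rule ccontr)
      assume neg: "\<not> norm (\<Delta> s) < \<delta>"
      define Z where "Z = {s\<in>{0..\<tau>}. \<delta> \<le> norm (\<Delta> s)}"
      have Zne: "Z \<noteq> {}" using that neg Z_def by auto
      have Zc: "closed Z"
      proof -
        have "continuous_on {0..\<tau>} (\<lambda>s. norm (\<Delta> s))"
          by (intro continuous_intros continuous_on_subset[OF c\<Delta>]) auto
        from continuous_closed_preimage[OF this closed_atLeastAtMost closed_atLeast, of \<delta>]
        show ?thesis unfolding Z_def by (simp add: vimage_def Int_def conj_commute)
      qed
      have Zb: "bdd_below Z" unfolding Z_def by (auto intro: bdd_belowI[of _ 0])
      define s1 where "s1 = Inf Z"
      have s1Z: "s1 \<in> Z" unfolding s1_def using Zne Zc Zb closed_contains_Inf by blast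
      have sle: "\<And>r. r \<in> Z \<Longrightarrow> s1 \<le> r" unfolding s1_def using Zb by (simp add: cInf_lower)
      have s1r: "s1 \<in> {0..\<tau>}" "\<delta> \<le> norm (\<Delta> s1)" using s1Z Z_def by auto
      have sm: "\<forall>t. 0 < t \<and> t < s1 \<longrightarrow> norm (\<Delta> t) < \<delta>"
      proof (intro allI impI)
        fix t assume t: "0 < t \<and> t < s1"
        then have "t \<notin> Z" using sle by force
        then show "norm (\<Delta> t) < \<delta>" using t s1r Z_def by auto
      qed
      have "(norm (\<Delta> s1))\<^sup>2 \<le> n0\<^sup>2 * K\<^sup>2"
        using gron[OF s1r(1) sm] expK[OF s1r(1)] n0 by (meson mult_left_mono order_trans zero_le_power2)
      also have "\<dots> = (n0 * K)\<^sup>2" by (simp add: power_mult_distrib)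
      also have "\<dots> < \<delta>\<^sup>2" using n0K n0 K1 by (intro power_strict_mono) auto
      finally have "norm (\<Delta> s1) < \<delta>" by (rule power2_less_imp_less) (use \<delta> in simp)
      with s1r show False by simp
    qed
    have \<Delta>b: "norm (\<Delta> s) \<le> n0 * K" if s: "s \<in> {0..\<tau>}" for s
    proof (rule power2_le_imp_le)
      have "(norm (\<Delta> s))\<^sup>2 \<le> n0\<^sup>2 * K\<^sup>2"
        using gron[OF s] small s expK[OF s] n0 by (meson atLeastAtMost_iff less_imp_le mult_left_mono order_trans zero_le_power2)
      then show "(norm (\<Delta> s))\<^sup>2 \<le> (n0 * K)\<^sup>2" by (simp add: power_mult_distrib)
    qed (use n0 K1 in simp)
    define r where "r s = \<Delta> s - Qm x0 s (\<Delta> 0)" for s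
    define r' where "r' s = FD s - DFapp f' g' (Phi s x0) (Qm x0 s (\<Delta> 0))" for s
    have dr: "(r has_vector_derivative r' s) (at s within {0..})" if "s \<ge> 0" for s
      unfolding r_def r'_def
      using Qm_sol[OF x0, of "\<Delta> 0"] d\<Delta>[OF that] that unfolding issol_def
      by (intro has_vector_derivative_diff) auto
    have r0: "r 0 = 0" unfolding r_def using Qm_0[OF x0] by simp
    define E where "E = \<epsilon>1 * n0 * K"
    have E0: "E \<ge> 0" unfolding E_def using e1 n0 K1 by simp
    have rle: "(\<lambda>s. (norm (r s))\<^sup>2 + E\<^sup>2) \<tau> \<le> (\<lambda>s. (norm (r s))\<^sup>2 + E\<^sup>2) 0 * exp ((2 * M + 1) * \<tau>)"
    proof (rule gronwall[where S="{0..}"])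
      fix t :: real assume "0 \<le> t" "t \<le> \<tau>"
      then show "((\<lambda>s. (norm (r s))\<^sup>2 + E\<^sup>2) has_real_derivative 2 * inner (r t) (r' t)) (at t within {0..})"
        using DERIV_add[OF norm2_deriv[OF dr[of t]] DERIV_const[of "E\<^sup>2"]] by simp
    next
      fix t :: real assume t: "0 < t" "t < \<tau>"
      have tt: "t \<in> {0..\<tau>}" using t by auto
      let ?y = "Phi t x0" and ?y' = "Phi t x"
      have A: "norm (FD t - DFapp f' g' ?y (\<Delta> t)) \<le> E"
      proof -
        have S: "convex (cball ?y (norm (\<Delta> t)))" "cball ?y (norm (\<Delta> t)) \<subseteq> U"
          using ball tt small[OF tt] NU by fastforce+
        have "norm ((f ?y', g ?y') - (f ?y, g ?y) - DFapp f' g' ?y (?y' - ?y)) \<le> \<epsilon>1 * norm (?y' - ?y)"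
        proof (rule FF_lin[OF S])
          show "?y \<in> cball ?y (norm (\<Delta> t))" by simp
          show "?y' \<in> cball ?y (norm (\<Delta> t))" by (simp add: \<Delta>_def dist_norm norm_minus_commute)
          fix p assume p: "p \<in> cball ?y (norm (\<Delta> t))"
          have pN: "p \<in> N" using p ball tt small[OF tt] by fastforce
          have "dist p ?y \<le> norm (\<Delta> t)" using p by (simp add: dist_commute)
          also have "\<dots> \<le> n0 * K" by (rule \<Delta>b[OF tt])
          also have "\<dots> < \<eta>" using n0K by simp
          finally show "norm (f' p - f' ?y) + norm (g' p - g' ?y) \<le> \<epsilon>1"
            by (rule unif[OF cent[OF tt] pN])
        qed
        also have "\<dots> \<le> \<epsilon>1 * (n0 * K)" using \<Delta>b[OF tt] e1 unfolding \<Delta>_def by (intro mult_left_mono) auto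
        finally show ?thesis unfolding FD_def \<Delta>_def E_def by (simp add: mult.assoc)
      qed
      have B: "norm (DFapp f' g' ?y (r t)) \<le> M * norm (r t)"
        using DFapp_bound[of f' g' ?y "r t"] MN[OF cent[OF tt]] by (meson mult_right_mono norm_ge_zero order_trans)
      have r'eq: "r' t = (FD t - DFapp f' g' ?y (\<Delta> t)) + DFapp f' g' ?y (r t)"
        unfolding r'_def r_def by (simp add: linear_diff[OF DFapp_linear])
      have nr': "norm (r' t) \<le> E + M * norm (r t)"
        unfolding r'eq using A B norm_triangle_le by (meson add_mono norm_triangle_ineq order_trans)
      have "inner (r t) (r' t) \<le> norm (r t) * norm (r' t)" by (rule norm_cauchy_schwarz)
      also have "\<dots> \<le> norm (r t) * (E + M * norm (r t))" using nr' by (intro mult_left_mono) auto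
      finally have I: "2 * inner (r t) (r' t) \<le> 2 * norm (r t) * E + 2 * M * (norm (r t))\<^sup>2"
        by (simp add: algebra_simps power2_eq_square)
      have sq: "0 \<le> (norm (r t) - E)\<^sup>2" by simp
      then have "2 * norm (r t) * E \<le> (norm (r t))\<^sup>2 + E\<^sup>2" by (simp add: power2_diff)
      moreover have "0 \<le> 2 * M * E\<^sup>2" using M0le by simp
      ultimately show "2 * inner (r t) (r' t) \<le> (2 * M + 1) * ((norm (r t))\<^sup>2 + E\<^sup>2)"
        using I by (simp add: algebra_simps)
    qed (use tau in auto)
    have "(norm (r \<tau>))\<^sup>2 + E\<^sup>2 \<le> E\<^sup>2 * exp ((2 * M + 1) * \<tau>)" using rle r0 by simp
    then have "(norm (r \<tau>))\<^sup>2 \<le> E\<^sup>2 * exp ((2 * M + 1) * \<tau>)" using zero_le_power2[of E] by linarith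
    also have "exp ((2 * M + 1) * \<tau>) = K2\<^sup>2" unfolding K2_def by (simp add: exp_double[symmetric] algebra_simps)
    finally have "(norm (r \<tau>))\<^sup>2 \<le> (E * K2)\<^sup>2" by (simp add: power_mult_distrib)
    then have "norm (r \<tau>) \<le> E * K2" by (rule power2_le_imp_le) (use E0 K21 in simp)
    also have "E * K2 = \<epsilon> * n0" unfolding E_def \<epsilon>1_def using K1 K21 by (simp add: field_simps)
    finally show "norm (Phi \<tau> x - Phi \<tau> x0 - Qm x0 \<tau> (x - x0)) \<le> \<epsilon> * norm (x - x0)"
      unfolding r_def \<Delta>_def n0_def using \<Delta>0 by (simp add: \<Delta>_def)
  qed
qed

end



context setting begin

lemma h_deriv:
  assumes z0: "z0 \<in> snd ` U"
  shows "(h has_derivative Hm (h z0, z0)) (at z0)"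
proof -
  define x0 where "x0 = (h z0, z0)"
  have x0: "x0 \<in> \<Gamma>" using graph_Gamma[OF z0] x0_def by simp
  define H where "H = Hm x0"
  have linH: "linear H" unfolding H_def by (rule Hm_linear[OF x0])
  have blH: "bounded_linear H" using linH linear_conv_bounded_linear by blast
  obtain B where B: "B > 0" "\<And>v. norm (H v) \<le> norm v * B"
    using bounded_linear.pos_bounded[OF blH] by blast
  have openK: "open (snd ` U)" by (rule open_image_snd[OF H1_open])
  obtain d0 where d0: "d0 > 0" "ball z0 d0 \<subseteq> snd ` U"
    using openK z0 open_contains_ball by blast
  have main: "\<exists>d>0. \<forall>y. norm (y - z0) < d \<longrightarrow> norm (h y - h z0 - H (y - z0)) \<le> e * norm (y - z0)"
    if e: "e > 0" for e
  proof (rule ccontr)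
    assume neg: "\<not> ?thesis"
    have "\<exists>y. norm (y - z0) < min d0 (1 / real (Suc n)) \<and> norm (h y - h z0 - H (y - z0)) > e * norm (y - z0)" for n
    proof -
      have pos: "min d0 (1 / real (Suc n)) > 0" using d0 by simp
      have "\<forall>d>0. \<exists>y. norm (y - z0) < d \<and> e * norm (y - z0) < norm (h y - h z0 - H (y - z0))"
        using neg by (auto simp: not_le)
      from this[rule_format, OF pos] show ?thesis by blast
    qed
    then obtain Y where Y: "\<And>n. norm (Y n - z0) < min d0 (1 / real (Suc n))"
      and Yb: "\<And>n. norm (h (Y n) - h z0 - H (Y n - z0)) > e * norm (Y n - z0)"
      by metis
    define \<sigma> where "\<sigma> n = norm (Y n - z0)" for n
    have \<sigma>pos: "\<sigma> n > 0" for n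
    proof (rule ccontr)
      assume "\<not> \<sigma> n > 0"
      then have "Y n = z0" unfolding \<sigma>_def by simp
      with Yb[of n] show False by (simp add: linear_0[OF linH])
    qed
    have YK: "Y n \<in> snd ` U" for n using Y[of n] d0 by (auto simp: dist_norm norm_minus_commute)
    have \<sigma>lim: "\<sigma> \<longlonglongrightarrow> 0"
    proof (rule tendsto_sandwich[where f="\<lambda>n. 0" and h="\<lambda>n. inverse (real (Suc n))"])
      show "\<forall>\<^sub>F n in sequentially. 0 \<le> \<sigma> n" using \<sigma>pos by (simp add: less_imp_le)
      show "\<forall>\<^sub>F n in sequentially. \<sigma> n \<le> inverse (real (Suc n))"
        using Y unfolding \<sigma>_def by (simp add: less_imp_le inverse_eq_divide)
      show "(\<lambda>n. inverse (real (Suc n))) \<longlonglongrightarrow> 0" by (rule LIMSEQ_inverse_real_of_nat)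
    qed simp
    define u where "u n = (1 / \<sigma> n) *\<^sub>R (Y n - z0)" for n
    define ee where "ee n = (1 / \<sigma> n) *\<^sub>R (h (Y n) - h z0 - H (Y n - z0))" for n
    have nu: "norm (u n) = 1" for n unfolding u_def \<sigma>_def using \<sigma>pos[of n] unfolding \<sigma>_def by simp
    have nee: "norm (ee n) > e" for n
    proof -
      have "norm (ee n) = norm (h (Y n) - h z0 - H (Y n - z0)) / \<sigma> n"
        unfolding ee_def norm_scaleR using \<sigma>pos[of n] by simp
      then show ?thesis using Yb[of n] \<sigma>pos[of n] unfolding \<sigma>_def
        by (simp add: pos_less_divide_eq)
    qed
    have neeb: "norm (ee n) \<le> 1 + B" for n
    proof -
      have "norm (h (Y n) - h z0 - H (Y n - z0)) \<le> norm (h (Y n) - h z0) + norm (H (Y n - z0))"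
        by (rule norm_triangle_ineq4)
      also have "\<dots> \<le> \<sigma> n + \<sigma> n * B"
        using h_lip[OF YK z0] B(2)[of "Y n - z0"] unfolding \<sigma>_def by (intro add_mono) auto
      moreover have "norm (ee n) = norm (h (Y n) - h z0 - H (Y n - z0)) / \<sigma> n"
        unfolding ee_def norm_scaleR using \<sigma>pos[of n] by simp
      ultimately show ?thesis using \<sigma>pos[of n] by (simp add: divide_le_eq algebra_simps)
    qed
    define P where "P n = (u n, ee n)" for n
    have "seq_compact (cball (0::'b \<times> 'a) (2 + B))"
      by (rule compact_imp_seq_compact[OF compact_cball])
    moreover have "\<forall>n. P n \<in> cball 0 (2 + B)"
    proof
      fix n
      have "norm (P n) \<le> norm (u n) + norm (ee n)" unfolding P_def by (rule norm_pair_le)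
      then show "P n \<in> cball 0 (2 + B)" using nu[of n] neeb[of n] by simp
    qed
    ultimately obtain l r where r: "strict_mono r" and lim: "(P \<circ> r) \<longlonglongrightarrow> l"
      by (rule seq_compactE)
    define ub where "ub = fst l"
    define eb where "eb = snd l"
    have ulim: "(\<lambda>n. u (r n)) \<longlonglongrightarrow> ub" unfolding ub_def
      using tendsto_fst[OF lim] by (simp add: P_def o_def)
    have elim: "(\<lambda>n. ee (r n)) \<longlonglongrightarrow> eb" unfolding eb_def
      using tendsto_snd[OF lim] by (simp add: P_def o_def)
    have ebe: "norm eb \<ge> e"
      by (rule LIMSEQ_le_const[OF tendsto_norm[OF elim]]) (use nee in \<open>auto intro: less_imp_le\<close>)
    define vb where "vb = (H ub + eb, ub)"
    have vin: "vb \<in> Tl x0" unfolding Tl_def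
    proof (intro CollectI allI impI)
      fix t :: real assume t: "t \<ge> 0"
      define X where "X n = (h (Y n), Y n)" for n
      have XG: "X n \<in> \<Gamma>" for n unfolding X_def using graph_Gamma[OF YK] .
      have Xd: "norm (X n - x0) \<le> 2 * \<sigma> n" for n
      proof -
        have "norm (X n - x0) \<le> norm (h (Y n) - h z0) + norm (Y n - z0)"
          unfolding X_def x0_def using norm_pair_le by simp
        also have "\<dots> \<le> 2 * \<sigma> n" using h_lip[OF YK z0] unfolding \<sigma>_def by simp
        finally show ?thesis .
      qed
      define vs where "vs n = (1 / \<sigma> n) *\<^sub>R (X n - x0)" for n
      have vs_eq: "vs n = (H (u n) + ee n, u n)" for n
      proof -
        have Hu: "H (u n) = (1 / \<sigma> n) *\<^sub>R H (Y n - z0)" unfolding u_def by (rule linear_scale[OF linH])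
        show ?thesis unfolding vs_def X_def x0_def Hu by (simp add: ee_def u_def algebra_simps)
      qed
      have blQ: "bounded_linear (Qm x0 t)" using Qm_linear linear_conv_bounded_linear by blast
      have vslim: "(\<lambda>n. vs (r n)) \<longlonglongrightarrow> vb"
        unfolding vs_eq vb_def
        by (intro tendsto_intros ulim elim bounded_linear.tendsto[OF blH])
      have Qlim: "(\<lambda>n. Qm x0 t (vs (r n))) \<longlonglongrightarrow> Qm x0 t vb"
        by (rule bounded_linear.tendsto[OF blQ vslim])
      define D where "D n = (1 / \<sigma> n) *\<^sub>R (Phi t (X n) - Phi t x0)" for n
      have \<sigma>r: "(\<lambda>n. \<sigma> (r n)) \<longlonglongrightarrow> 0" using LIMSEQ_subseq_LIMSEQ[OF \<sigma>lim r] by (simp add: o_def)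
      have Dclose: "(\<lambda>n. D (r n) - Qm x0 t (vs (r n))) \<longlonglongrightarrow> 0"
        unfolding LIMSEQ_iff
      proof (intro allI impI)
        fix \<epsilon> :: real assume \<epsilon>: "\<epsilon> > 0"
        obtain \<rho> where \<rho>: "\<rho> > 0" and lin: "\<forall>x\<in>\<Gamma>. norm (x - x0) < \<rho> \<longrightarrow>
            norm (Phi t x - Phi t x0 - Qm x0 t (x - x0)) \<le> (\<epsilon> / 4) * norm (x - x0)"
          using linearization[OF x0 t, of "\<epsilon> / 4"] \<epsilon> by auto
        obtain N where N: "\<forall>n\<ge>N. norm (\<sigma> (r n) - 0) < \<rho> / 2"
          using \<sigma>r \<rho> unfolding LIMSEQ_iff by (meson half_gt_zero)
        show "\<exists>N. \<forall>n\<ge>N. norm (D (r n) - Qm x0 t (vs (r n)) - 0) < \<epsilon>"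
        proof (intro exI allI impI)
          fix n assume n: "n \<ge> N"
          let ?m = "r n"
          have sm: "\<sigma> ?m < \<rho> / 2" using N n \<sigma>pos[of ?m] by auto
          have close: "norm (X ?m - x0) < \<rho>" using Xd[of ?m] sm by simp
          have L: "norm (Phi t (X ?m) - Phi t x0 - Qm x0 t (X ?m - x0)) \<le> (\<epsilon> / 4) * norm (X ?m - x0)"
            using lin XG close by blast
          have eq: "D ?m - Qm x0 t (vs ?m) = (1 / \<sigma> ?m) *\<^sub>R (Phi t (X ?m) - Phi t x0 - Qm x0 t (X ?m - x0))"
            unfolding D_def vs_def Qm_scale by (simp add: scaleR_diff_right)
          have "norm (D ?m - Qm x0 t (vs ?m)) = norm (Phi t (X ?m) - Phi t x0 - Qm x0 t (X ?m - x0)) / \<sigma> ?m"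
            unfolding eq using \<sigma>pos[of ?m] by simp
          also have "\<dots> \<le> ((\<epsilon> / 4) * (2 * \<sigma> ?m)) / \<sigma> ?m"
            using L Xd[of ?m] \<sigma>pos[of ?m] \<epsilon>
            by (intro divide_right_mono order_trans[OF L] mult_left_mono) auto
          also have "\<dots> = \<epsilon> / 2" using \<sigma>pos[of ?m] by simp
          finally show "norm (D ?m - Qm x0 t (vs ?m) - 0) < \<epsilon>" using \<epsilon> by simp
        qed
      qed
      have Dlim: "(\<lambda>n. D (r n)) \<longlonglongrightarrow> Qm x0 t vb"
      proof -
        have "(\<lambda>n. (D (r n) - Qm x0 t (vs (r n))) + Qm x0 t (vs (r n))) \<longlonglongrightarrow> 0 + Qm x0 t vb"
          by (rule tendsto_add[OF Dclose Qlim])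
        then show ?thesis by simp
      qed
      have DLq: "Lq (D n) \<le> 0" for n
      proof (rule Lq_neg_le)
        have nc: "norm (fst (Phi t (X n)) - fst (Phi t x0)) \<le> norm (snd (Phi t (X n)) - snd (Phi t x0))"
          by (rule noncone_Gamma[OF flow_in[OF XG t] flow_in[OF x0 t]])
        have "norm (fst (D n)) = (1 / \<sigma> n) * norm (fst (Phi t (X n)) - fst (Phi t x0))"
          unfolding D_def using \<sigma>pos[of n] by simp
        also have "\<dots> \<le> (1 / \<sigma> n) * norm (snd (Phi t (X n)) - snd (Phi t x0))"
          using nc \<sigma>pos[of n] by (intro mult_left_mono) auto
        also have "\<dots> = norm (snd (D n))" unfolding D_def using \<sigma>pos[of n] by simp
        finally show "norm (fst (D n)) \<le> norm (snd (D n))" .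
      qed
      show "Lq (Qm x0 t vb) \<le> 0"
        by (rule LIMSEQ_le_const2[OF isCont_tendsto_compose[OF Lq_cont Dlim]]) (use DLq in auto)
    qed
    have "H ub + eb = Hm x0 ub" using Tl_unique[OF x0 vin[unfolded vb_def]] .
    then have "eb = 0" unfolding H_def by simp
    with ebe e show False by simp
  qed
  show ?thesis unfolding has_derivative_at_alt x0_def[symmetric] H_def[symmetric]
    using blH main by blast
qed

end

theorem lemma2p11:
  fixes f :: "'a::euclidean_space \<times> 'b::euclidean_space \<Rightarrow> 'a"
    and g :: "'a \<times> 'b \<Rightarrow> 'b"
    and f' :: "'a \<times> 'b \<Rightarrow> ('a \<times> 'b) \<Rightarrow>\<^sub>L 'a"
    and g' :: "'a \<times> 'b \<Rightarrow> ('a \<times> 'b) \<Rightarrow>\<^sub>L 'b"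
    and U \<Gamma> :: "('a \<times> 'b) set"
    and Phi :: "real \<Rightarrow> 'a \<times> 'b \<Rightarrow> 'a \<times> 'b"
    and alpha ell :: "'a \<times> 'b \<Rightarrow> real"
    and d c1 :: real
    and h :: "'b \<Rightarrow> 'a"
  assumes H1_open: "open U" and H1_convex: "convex U" and H1_d: "d > 0"
    and H1_cone: "\<forall>x\<in>U. Ccone x \<inter> U \<subseteq> Bbox d x"
    and H2_f: "\<forall>x\<in>U. (f has_derivative blinfun_apply (f' x)) (at x)"
    and H2_g: "\<forall>x\<in>U. (g has_derivative blinfun_apply (g' x)) (at x)"
    and H2_fcont: "continuous_on U f'" and H2_gcont: "continuous_on U g'"
    and H2_alpha: "continuous_on U alpha" "\<forall>x\<in>U. alpha x > 0"
    and H2_ell: "continuous_on U ell" "\<forall>x\<in>U. ell x \<ge> 0"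
    and H2_c1: "c1 > 0"
    and H2_a: "\<forall>x\<in>U. \<forall>a'. inner a' (blinfun_apply (f' x) (a', 0)) \<ge> alpha x * (norm a')^2"
    and H2_z: "\<forall>x\<in>U. \<forall>z'. inner z' (blinfun_apply (g' x) (0, z')) \<le> ell x * (norm z')^2"
    and H2_dom: "\<forall>x\<in>U. alpha x \<ge> ell x + onorm (\<lambda>z'. blinfun_apply (f' x) (0, z'))
                                  + onorm (\<lambda>a'. blinfun_apply (g' x) (a', 0)) + c1"
    and H3_sub: "\<Gamma> \<subseteq> U"
    and H3_flow: "\<forall>x\<in>\<Gamma>. Phi 0 x = x \<and>
        (\<forall>t\<ge>0. ((\<lambda>s. Phi s x) has_vector_derivative (f (Phi t x), g (Phi t x))) (at t within {0..})
               \<and> Phi t x \<in> \<Gamma>)"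
    and H3_proj: "snd ` \<Gamma> = snd ` U"
    and h_graph: "\<Gamma> = {(h z, z) | z. z \<in> snd ` U}"
  shows "\<forall>z\<in>snd ` U. (h has_derivative Hmap f' g' Phi (h z, z)) (at z)"
  proof -
  interpret S: setting f g f' g' U \<Gamma> Phi alpha ell d c1 h
    by (rule setting.intro) (rule assms)+
  show ?thesis
  proof
    fix z assume z: "z \<in> snd ` U"
    have "(h z, z) \<in> \<Gamma>" by (rule S.graph_Gamma[OF z])
    then show "(h has_derivative Hmap f' g' Phi (h z, z)) (at z)"
      using S.h_deriv[OF z] S.Hmap_eq by simp
  qed
qed

end
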